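(* Let $H$ be a Hilbert space and $A$ a linear, closed, densely defined operator in $H$. Let $T:=A^*A$ (a densely defined selfadjoint nonnegative operator) with resolution of the identity $E_s$, and for $a>0$ let $T_a:=T+aI$; denote by $T_a^{-1}A^*$ the closure of this densely defined operator, which is a bounded operator on all of $H$. Fix $p\in(0,1)$ and $k_p>0$, and let $$\mathcal K:=\Big\{u\in H:\ \int_0^\infty s^{-2p}\,d(E_su,u)\le k_p^2\Big\}.$$ For $\delta>0$ and $f_\delta\in H$ let $S_\delta:=\{v\in\mathcal K\cap D(A):\ \|Av-f_\delta\|\le\delta\}$, and let $R(\delta):=T_{a(\delta)}^{-1}A^*$ where $a(\delta)>0$. (i) If $\lim_{\delta\to0}a(\delta)=0$ and $\lim_{\delta\to0}\delta/a(\delta)^{1/2}=0$, then $R(\delta)$ is a regularizer, i.e. there is $\eta(\delta)\to0$ as $\delta\to0$ with $\sup_{v\in S_\delta}\|R(\delta)f_\delta-v\|\le\eta(\delta)$. (ii) If $a(\delta)=b_p\delta^{\frac{2}{2p+1}}$, then $$\sup_{y\in\mathcal K\cap D(A),\ \|Ay-f_\delta\|\le\delta}\|R(\delta)f_\delta-y\|\le C_p\,\delta^{\frac{2p}{2p+1}},$$ where $c_p=p^p(1-p)^{1-p}$, $b_p=(4pc_pk_p)^{-\frac{2}{2p+1}}$, and $C_p=\frac{1}{2\sqrt{b_p}}+c_pk_pb_p^p$. Moreover, this choice $a=a(\delta)$ is the minimizer over $a>0$ of the function $a\mapsto\frac{\delta}{2\sqrt a}+c_pk_pa^p$, and the minimum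 value is $C_p\delta^{\frac{2p}{2p+1}}$.
   Context: A family of operators $R(\delta)$ is called a regularizer (in the new sense of the paper) for $Au=f$ if $\sup_{v\in S_\delta}\|R(\delta)f_\delta-v\|\le\eta(\delta)\to0$ as $\delta\to0$, where $S_\delta$ consists of all $v$ in the a priori set $\mathcal K$ satisfying $\|Av-f_\delta\|\le\delta$, $f_\delta$ being the noisy data. *)

theory Defs
  imports "HOL-Analysis.Analysis"
begin

text \<open>Unbounded operators on a (real) Hilbert space are represented by a pair
  (domain, function): the domain is a set and the function is only meaningful on it.\<close>

definition linear_op :: "'a::real_vector set \<Rightarrow> ('a \<Rightarrow> 'b::real_vector) \<Rightarrow> bool" where
  "linear_op D A \<longleftrightarrow> subspace D \<and>
     (\<forall>x\<in>D. \<forall>y\<in>D. A (x + y) = A x + A y) \<and> (\<forall>c. \<forall>x\<in>D. A (c *\<^sub>R x) = c *\<^sub>R A x)"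

definition adj_dom :: "'a::real_inner set \<Rightarrow> ('a \<Rightarrow> 'a) \<Rightarrow> 'a set" where
  "adj_dom D A = {y. \<exists>z. \<forall>x\<in>D. inner (A x) y = inner x z}"

definition adj :: "'a::real_inner set \<Rightarrow> ('a \<Rightarrow> 'a) \<Rightarrow> 'a \<Rightarrow> 'a" where
  "adj D A y = (THE z. \<forall>x\<in>D. inner (A x) y = inner x z)"

definition T_dom :: "'a::real_inner set \<Rightarrow> ('a \<Rightarrow> 'a) \<Rightarrow> 'a set" where
  "T_dom D A = {x \<in> D. A x \<in> adj_dom D A}"

definition T_op :: "'a::real_inner set \<Rightarrow> ('a \<Rightarrow> 'a) \<Rightarrow> 'a \<Rightarrow> 'a" where
  "T_op D A x = adj D A (A x)"

definition spec_meas :: "(real \<Rightarrow> 'a \<Rightarrow> 'a) \<Rightarrow> 'a::real_inner \<Rightarrow> real measure" where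
  "spec_meas E u = interval_measure (\<lambda>s. inner (E s u) u)"

text \<open>E is a resolution of the identity (spectral family) and the operator (TD, T)
  equals the spectral integral of s dE_s.\<close>
definition resolution_of_identity ::
  "(real \<Rightarrow> 'a \<Rightarrow> 'a) \<Rightarrow> 'a::{real_inner,complete_space} set \<Rightarrow> ('a \<Rightarrow> 'a) \<Rightarrow> bool" where
  "resolution_of_identity E TD T \<longleftrightarrow>
     (\<forall>s. bounded_linear (E s) \<and> (\<forall>x. E s (E s x) = E s x) \<and>
          (\<forall>x y. inner (E s x) y = inner x (E s y))) \<and>
     (\<forall>s t x. s \<le> t \<longrightarrow> E s (E t x) = E s x) \<and>
     (\<forall>s x. ((\<lambda>t. E t x) \<longlongrightarrow> E s x) (at_right s)) \<and>
     (\<forall>x. ((\<lambda>t. E t x) \<longlongrightarrow> 0) at_bot) \<and>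
     (\<forall>x. ((\<lambda>t. E t x) \<longlongrightarrow> x) at_top) \<and>
     TD = {u. (\<integral>\<^sup>+ s. ennreal (s\<^sup>2) \<partial>spec_meas E u) < \<infinity>} \<and>
     (\<forall>u\<in>TD. \<forall>v\<in>TD. inner (T u) v =
        (integral\<^sup>L (spec_meas E (u + v)) (\<lambda>s. s) - integral\<^sup>L (spec_meas E (u - v)) (\<lambda>s. s)) / 4)"

text \<open>R(a) = closure of (T + aI)^{-1} A*, i.e. the bounded linear operator on the whole
  space that agrees with (T + aI)^{-1} A* on D(A*).\<close>
definition Rop :: "'a::{real_inner,complete_space} set \<Rightarrow> ('a \<Rightarrow> 'a) \<Rightarrow> real \<Rightarrow> 'a \<Rightarrow> 'a" where
  "Rop D A a = (THE L. bounded_linear L \<and>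
      (\<forall>y\<in>adj_dom D A. L y \<in> T_dom D A \<and> T_op D A (L y) + a *\<^sub>R L y = adj D A y))"

text \<open>The a priori set K = {u. int_0^infty s^(-2p) d(E_s u,u) <= k_p^2}; at s = 0 the
  integrand s^(-2p) is +infinity.\<close>
definition Kset :: "(real \<Rightarrow> 'a \<Rightarrow> 'a) \<Rightarrow> real \<Rightarrow> real \<Rightarrow> 'a::real_inner set" where
  "Kset E p k = {u. set_nn_integral (spec_meas E u) {0..}
      (\<lambda>s. if s = 0 then \<infinity> else ennreal (s powr (-2 * p))) \<le> ennreal (k\<^sup>2)}"

definition Sdelta :: "'a set \<Rightarrow> 'a set \<Rightarrow> ('a \<Rightarrow> 'a::real_normed_vector) \<Rightarrow> real \<Rightarrow> 'a \<Rightarrow> 'a set" where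
  "Sdelta K D A \<delta> fd = {v \<in> K \<inter> D. norm (A v - fd) \<le> \<delta>}"

definition c_p :: "real \<Rightarrow> real" where
  "c_p p = p powr p * (1 - p) powr (1 - p)"

definition b_p :: "real \<Rightarrow> real \<Rightarrow> real" where
  "b_p p k = (4 * p * c_p p * k) powr (- 2 / (2 * p + 1))"

definition C_p :: "real \<Rightarrow> real \<Rightarrow> real" where
  "C_p p k = 1 / (2 * sqrt (b_p p k)) + c_p p * k * b_p p k powr p"

end

theory Submission
  imports Defs
begin


lemma parallelogram_inner:
  fixes x y :: "'b::real_inner"
  shows "norm (x + y)^2 + norm (x - y)^2 = 2 * norm x ^2 + 2 * norm y ^2"
  by (simp add: power2_norm_eq_inner inner_add inner_diff inner_commute)

lemma quad_nonneg_imp_zero: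
  fixes \<alpha> \<beta> :: real
  assumes "\<beta> \<ge> 0" and "\<And>t. - 2 * t * \<alpha> + t^2 * \<beta> \<ge> 0"
  shows "\<alpha> = 0"
proof -
  define t where "t = \<alpha>/(\<beta>+1)"
  have b1: "\<beta>+1 > 0" using assms(1) by simp
  have "- 2 * t * \<alpha> + t^2 * \<beta> \<ge> 0" using assms(2) .
  then have "(\<beta>+1)^2 * (- 2 * t * \<alpha> + t^2 * \<beta>) \<ge> 0" by simp
  moreover have "(\<beta>+1)^2 * (- 2 * t * \<alpha> + t^2 * \<beta>) = \<alpha>^2 * (- 2 * (\<beta>+1) + \<beta>)"
  proof -
    have tb: "t*(\<beta>+1) = \<alpha>" using b1 unfolding t_def by simp
    have "(\<beta>+1)^2 * (- 2 * t * (t*(\<beta>+1)) + t^2 * \<beta>) = (t*(\<beta>+1))^2 * (- 2 * (\<beta>+1) + \<beta>)"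
      by (simp add: power2_eq_square algebra_simps)
    then show ?thesis by (simp only: tb)
  qed
  ultimately have "\<alpha>^2 * (- 2 * (\<beta>+1) + \<beta>) \<ge> 0" by simp
  moreover have "- 2 * (\<beta>+1) + \<beta> < 0" using assms(1) by simp
  ultimately show ?thesis
    using mult_pos_neg[of "\<alpha>^2" "- 2 * (\<beta>+1) + \<beta>"] by (cases "\<alpha> = 0") auto
qed

lemma proj_exists:
  fixes M :: "'b::{real_inner,complete_space} set"
  assumes sub: "subspace M" and cl: "closed M"
  shows "\<exists>m\<in>M. \<forall>v\<in>M. inner (h - m) v = 0"
proof -
  define d where "d = infdist h M"
  have Mne: "M \<noteq> {}" using sub subspace_0 by blast
  have d0: "d \<ge> 0" unfolding d_def by (rule infdist_nonneg)
  have dle: "d \<le> norm (h - m)" if "m \<in> M" for m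
    using infdist_le[OF that, of h] unfolding d_def by (simp add: dist_norm)
  have dle2: "d^2 \<le> norm (h - m)^2" if "m \<in> M" for m
    using dle[OF that] d0 by (simp add: power_mono)
  have approx: "\<exists>m\<in>M. norm (h - m) < d + e" if "e > 0" for e
  proof -
    have "infdist h M < d + e" using that d_def by simp
    then have "(INF a\<in>M. dist h a) < d + e" using infdist_notempty[OF Mne] by simp
    then obtain a where "a \<in> M" "dist h a < d + e"
      using cInf_lessD[of "dist h ` M" "d + e"] Mne by auto
    then show ?thesis by (auto simp: dist_norm)
  qed
  have approx2: "\<exists>m\<in>M. norm (h - m)^2 < d^2 + e" if "e > 0" for e
  proof -
    have "sqrt (d^2 + e) > d" using that d0
      by (intro real_less_rsqrt) simp
    then obtain m where "m \<in> M" "norm (h - m) < d + (sqrt (d^2+e) - d)"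
      using approx[of "sqrt (d^2+e) - d"] by auto
    then have "norm (h - m) < sqrt (d^2+e)" by simp
    then have "norm (h - m)^2 < (sqrt (d^2+e))^2"
      by (intro power_strict_mono) auto
    then have "norm (h - m)^2 < d^2 + e"
      using that d0 by simp
    then show ?thesis using \<open>m \<in> M\<close> by blast
  qed
  have "\<forall>n::nat. \<exists>m\<in>M. norm (h - m)^2 < d^2 + 1 / real (Suc n)"
    using approx2 by simp
  then obtain m where mM: "\<And>n. m n \<in> M" and mle: "\<And>n. norm (h - m n)^2 < d^2 + 1 / real (Suc n)"
    by metis
  have cd: "norm (m n - m k)^2 \<le> 2 / real (Suc n) + 2 / real (Suc k)" for n k
  proof -
    have mid: "(1/2) *\<^sub>R (m n + m k) \<in> M"
      using mM sub by (simp add: subspace_add subspace_scale)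
    have e1: "(h - m n) + (h - m k) = 2 *\<^sub>R (h - (1/2) *\<^sub>R (m n + m k))"
      by (simp add: algebra_simps scaleR_2)
    have e2: "(h - m n) - (h - m k) = m k - m n" by simp
    have "norm (m k - m n)^2 = 2 * norm (h - m n)^2 + 2 * norm (h - m k)^2
       - norm (2 *\<^sub>R (h - (1/2) *\<^sub>R (m n + m k)))^2"
      using parallelogram_inner[of "h - m n" "h - m k"] e1 e2 by simp
    also have "norm (2 *\<^sub>R (h - (1/2) *\<^sub>R (m n + m k)))^2 = 4 * norm (h - (1/2) *\<^sub>R (m n + m k))^2"
      by (simp add: power2_eq_square)
    finally have "norm (m k - m n)^2 \<le> 2 * (d^2 + 1 / real (Suc n)) + 2 * (d^2 + 1 / real (Suc k)) - 4 * d^2"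
      using mle[of n] mle[of k] dle2[OF mid] by (smt (verit))
    then show ?thesis by (simp add: norm_minus_commute)
  qed
  have "Cauchy m"
  proof (rule metric_CauchyI)
    fix e :: real assume e: "e > 0"
    obtain N :: nat where N: "4 / e^2 < real N" using reals_Archimedean2 by blast
    have "\<forall>n\<ge>N. \<forall>k\<ge>N. dist (m n) (m k) < e"
    proof (intro allI impI)
      fix n k assume nk: "N \<le> n" "N \<le> k"
      have "2 / real (Suc n) \<le> 2 / real (Suc N)" "2 / real (Suc k) \<le> 2 / real (Suc N)"
        using nk by (auto intro!: divide_left_mono)
      moreover have "4 / real (Suc N) < e^2"
      proof -
        have "4 < real N * e^2" using N e by (simp add: field_simps)
        moreover have "e^2 > 0" using e by simp
        moreover have "real (Suc N) * e^2 = e^2 + real N * e^2" by (simp add: algebra_simps)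
        ultimately have "4 < real (Suc N) * e^2" by linarith
        then show ?thesis by (simp add: field_simps)
      qed
      ultimately have "norm (m n - m k)^2 < e^2" using cd[of n k] by linarith
      then show "dist (m n) (m k) < e" using e by (simp add: dist_norm power_less_imp_less_base)
    qed
    then show "\<exists>N. \<forall>n\<ge>N. \<forall>k\<ge>N. dist (m n) (m k) < e" by blast
  qed
  then obtain m0 where lim: "m \<longlonglongrightarrow> m0" using Cauchy_convergent_iff convergent_def by blast
  have m0M: "m0 \<in> M" using cl lim mM closed_sequentially by blast
  have "(\<lambda>n. norm (h - m n)^2) \<longlonglongrightarrow> norm (h - m0)^2"
    by (intro tendsto_intros lim)
  moreover have "(\<lambda>n. d^2 + 1 / real (Suc n)) \<longlonglongrightarrow> d^2 + 0"
    by (intro tendsto_intros LIMSEQ_inverse_real_of_nat[unfolded inverse_eq_divide] )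
  ultimately have "norm (h - m0)^2 \<le> d^2 + 0"
    using mle by (intro LIMSEQ_le[where X="\<lambda>n. norm (h - m n)^2"]) (auto intro: less_imp_le)
  then have best: "norm (h - m0)^2 \<le> norm (h - x)^2" if "x \<in> M" for x
    using dle2[OF that] by linarith
  have "\<forall>v\<in>M. inner (h - m0) v = 0"
  proof
    fix v assume v: "v \<in> M"
    show "inner (h - m0) v = 0"
    proof (rule quad_nonneg_imp_zero[where \<beta> = "norm v ^2"])
      fix t :: real
      have "m0 + t *\<^sub>R v \<in> M" using sub m0M v by (simp add: subspace_add subspace_scale)
      from best[OF this] have b: "norm (h - m0)^2 \<le> norm ((h - m0) - t *\<^sub>R v)^2" by (simp add: algebra_simps)
      have w: "norm ((h - m0) - t *\<^sub>R v)^2 = norm (h - m0)^2 - 2 * t * inner (h - m0) v + t^2 * norm v ^2"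
        unfolding power2_norm_eq_inner by (simp add: inner_diff inner_commute algebra_simps power2_eq_square)
      show "- 2 * t * inner (h - m0) v + t^2 * norm v ^2 \<ge> 0"
        using b w by linarith
    qed simp
  qed
  then show ?thesis using m0M by blast
qed


locale opA =
  fixes DA :: "'a::{real_inner,complete_space} set" and A :: "'a \<Rightarrow> 'a"
  assumes lin: "linear_op DA A"
    and closedA: "closed {(x, A x) | x. x \<in> DA}"
    and dense: "closure DA = UNIV"
begin

lemma subD: "subspace DA" using lin unfolding linear_op_def by simp
lemma D0: "0 \<in> DA" using subD subspace_0 by blast
lemma Dadd: "x \<in> DA \<Longrightarrow> y \<in> DA \<Longrightarrow> x + y \<in> DA" using subD subspace_add by blast
lemma Dscale: "x \<in> DA \<Longrightarrow> c *\<^sub>R x \<in> DA" using subD subspace_scale by blast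
lemma Ddiff: "x \<in> DA \<Longrightarrow> y \<in> DA \<Longrightarrow> x - y \<in> DA" using subD subspace_diff by blast
lemma Aadd: "x \<in> DA \<Longrightarrow> y \<in> DA \<Longrightarrow> A (x + y) = A x + A y" using lin unfolding linear_op_def by simp
lemma Ascale: "x \<in> DA \<Longrightarrow> A (c *\<^sub>R x) = c *\<^sub>R A x" using lin unfolding linear_op_def by simp
lemma A0: "A 0 = 0" using Ascale[OF D0, of 0] by simp
lemma Aminus: "x \<in> DA \<Longrightarrow> A (- x) = - A x" using Ascale[of x "-1"] by simp
lemma Adiff: "x \<in> DA \<Longrightarrow> y \<in> DA \<Longrightarrow> A (x - y) = A x - A y"
  using Aadd[of x "- y"] Aminus[of y] Dscale[of y "-1"] by simp

lemma orth_dense: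
  assumes "\<And>x. x \<in> DA \<Longrightarrow> inner x z = 0"
  shows "z = 0"
proof -
  have cl: "closed {x. inner x z = 0}"
    by (intro closed_Collect_eq continuous_intros)
  have "DA \<subseteq> {x. inner x z = 0}" using assms by auto
  then have "closure DA \<subseteq> {x. inner x z = 0}" using cl closure_minimal by blast
  then have "z \<in> {x. inner x z = 0}" using dense by blast
  then show ?thesis by simp
qed

lemma adj_unique:
  assumes "\<forall>x\<in>DA. inner (A x) y = inner x z1" "\<forall>x\<in>DA. inner (A x) y = inner x z2"
  shows "z1 = z2"
proof -
  have "z1 - z2 = 0"
    by (rule orth_dense) (use assms in \<open>simp add: inner_diff_right\<close>)
  then show ?thesis by simp
qed

lemma adj_prop:
  assumes "y \<in> adj_dom DA A"
  shows "\<forall>x\<in>DA. inner (A x) y = inner x (adj DA A y)"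
proof -
  obtain z where z: "\<forall>x\<in>DA. inner (A x) y = inner x z" using assms unfolding adj_dom_def by blast
  have "adj DA A y = z" unfolding adj_def
  proof (rule the_equality)
    show "\<forall>x\<in>DA. inner (A x) y = inner x z" by (rule z)
  next
    fix w assume "\<forall>x\<in>DA. inner (A x) y = inner x w"
    then show "w = z" using adj_unique[OF _ z] by blast
  qed
  then show ?thesis using z by simp
qed

lemma adj_eqI:
  assumes "\<forall>x\<in>DA. inner (A x) y = inner x z"
  shows "y \<in> adj_dom DA A" "adj DA A y = z"
proof -
  show y: "y \<in> adj_dom DA A" using assms unfolding adj_dom_def by blast
  show "adj DA A y = z" using adj_unique[OF adj_prop[OF y] assms] .
qed

lemma adj_add:
  assumes "y1 \<in> adj_dom DA A" "y2 \<in> adj_dom DA A"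
  shows "y1 + y2 \<in> adj_dom DA A" "adj DA A (y1 + y2) = adj DA A y1 + adj DA A y2"
proof -
  have "\<forall>x\<in>DA. inner (A x) (y1 + y2) = inner x (adj DA A y1 + adj DA A y2)"
    using adj_prop[OF assms(1)] adj_prop[OF assms(2)] by (simp add: inner_add_right)
  then show "y1 + y2 \<in> adj_dom DA A" "adj DA A (y1 + y2) = adj DA A y1 + adj DA A y2"
    using adj_eqI by blast+
qed

lemma adj_scale:
  assumes "y \<in> adj_dom DA A"
  shows "c *\<^sub>R y \<in> adj_dom DA A" "adj DA A (c *\<^sub>R y) = c *\<^sub>R adj DA A y"
proof -
  have "\<forall>x\<in>DA. inner (A x) (c *\<^sub>R y) = inner x (c *\<^sub>R adj DA A y)"
    using adj_prop[OF assms(1)] by simp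
  then show "c *\<^sub>R y \<in> adj_dom DA A" "adj DA A (c *\<^sub>R y) = c *\<^sub>R adj DA A y"
    using adj_eqI by blast+
qed

lemma adj_diff:
  assumes "y1 \<in> adj_dom DA A" "y2 \<in> adj_dom DA A"
  shows "y1 - y2 \<in> adj_dom DA A" "adj DA A (y1 - y2) = adj DA A y1 - adj DA A y2"
  using adj_add[OF assms(1) adj_scale(1)[OF assms(2), of "-1"]] adj_scale(2)[OF assms(2), of "-1"]
  by auto

lemma adj0: "0 \<in> adj_dom DA A"
  using adj_eqI(1)[of 0 0] by simp

lemma Tdom_D: "x \<in> T_dom DA A \<Longrightarrow> x \<in> DA" unfolding T_dom_def by simp

lemma T_add:
  assumes "x \<in> T_dom DA A" "y \<in> T_dom DA A"
  shows "x + y \<in> T_dom DA A" "T_op DA A (x + y) = T_op DA A x + T_op DA A y"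
  using assms adj_add[of "A x" "A y"] Aadd[of x y] Dadd[of x y]
  unfolding T_dom_def T_op_def by auto

lemma T_scale:
  assumes "x \<in> T_dom DA A"
  shows "c *\<^sub>R x \<in> T_dom DA A" "T_op DA A (c *\<^sub>R x) = c *\<^sub>R T_op DA A x"
  using assms adj_scale[of "A x" c] Ascale[of x c] Dscale[of x c]
  unfolding T_dom_def T_op_def by auto

lemma T_diff:
  assumes "x \<in> T_dom DA A" "y \<in> T_dom DA A"
  shows "x - y \<in> T_dom DA A" "T_op DA A (x - y) = T_op DA A x - T_op DA A y"
  using assms adj_diff[of "A x" "A y"] Adiff[of x y] Ddiff[of x y]
  unfolding T_dom_def T_op_def by auto

lemma T_form:
  assumes "x \<in> T_dom DA A" "w \<in> DA"
  shows "inner (T_op DA A x) w = inner (A x) (A w)"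
  using adj_prop[of "A x"] assms unfolding T_dom_def T_op_def by (simp add: inner_commute)

lemma T_pos:
  assumes "x \<in> T_dom DA A"
  shows "inner (T_op DA A x) x = norm (A x)^2"
  using T_form[OF assms Tdom_D[OF assms]] by (simp add: power2_norm_eq_inner)

lemma T_symm:
  assumes "x \<in> T_dom DA A" "y \<in> T_dom DA A"
  shows "inner (T_op DA A x) y = inner x (T_op DA A y)"
  using T_form[OF assms(1) Tdom_D[OF assms(2)]] T_form[OF assms(2) Tdom_D[OF assms(1)]]
  by (simp add: inner_commute)

lemma Ta_inj:
  assumes "a > 0" "x \<in> T_dom DA A" "y \<in> T_dom DA A"
    and "T_op DA A x + a *\<^sub>R x = T_op DA A y + a *\<^sub>R y"
  shows "x = y"
proof -
  let ?w = "x - y"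
  have w: "?w \<in> T_dom DA A" "T_op DA A ?w + a *\<^sub>R ?w = 0"
  proof -
    show "?w \<in> T_dom DA A" using T_diff(1)[OF assms(2,3)] .
    have "T_op DA A ?w + a *\<^sub>R ?w = (T_op DA A x + a *\<^sub>R x) - (T_op DA A y + a *\<^sub>R y)"
      by (simp add: T_diff(2)[OF assms(2,3)] algebra_simps)
    then show "T_op DA A ?w + a *\<^sub>R ?w = 0" using assms(4) by simp
  qed
  then have "inner (T_op DA A ?w + a *\<^sub>R ?w) ?w = 0" by simp
  then have "norm (A ?w)^2 + a * inner ?w ?w = 0"
    using T_pos[OF w(1)] by (simp add: inner_add_left)
  moreover have "inner ?w ?w \<ge> 0" by simp
  ultimately have "a * inner ?w ?w = 0" using assms(1)
    by (smt (verit) mult_nonneg_nonneg zero_le_power2)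
  then show ?thesis using assms(1) by simp
qed

definition decP :: "real \<Rightarrow> 'a \<Rightarrow> 'a \<Rightarrow> 'a \<Rightarrow> bool" where
  "decP c h1 h2 x \<longleftrightarrow> x \<in> DA \<and> (\<forall>x'\<in>DA. inner (h1 - x) x' + inner (h2 - c *\<^sub>R A x) (c *\<^sub>R A x') = 0)"

lemma graph_sub: "subspace {(x, c *\<^sub>R A x) | x. x \<in> DA}"
  unfolding subspace_def
proof (intro conjI ballI allI)
  show "0 \<in> {(x, c *\<^sub>R A x) | x. x \<in> DA}" using D0 A0 by (auto simp: zero_prod_def)
next
  fix u v assume "u \<in> {(x, c *\<^sub>R A x) | x. x \<in> DA}" "v \<in> {(x, c *\<^sub>R A x) | x. x \<in> DA}"
  then obtain x y where "u = (x, c *\<^sub>R A x)" "v = (y, c *\<^sub>R A y)" "x \<in> DA" "y \<in> DA" by blast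
  then show "u + v \<in> {(x, c *\<^sub>R A x) | x. x \<in> DA}"
    using Aadd Dadd by (auto simp: scaleR_add_right intro!: exI[of _ "x + y"])
next
  fix r :: real and u assume "u \<in> {(x, c *\<^sub>R A x) | x. x \<in> DA}"
  then obtain x where "u = (x, c *\<^sub>R A x)" "x \<in> DA" by blast
  then show "r *\<^sub>R u \<in> {(x, c *\<^sub>R A x) | x. x \<in> DA}"
    using Ascale Dscale by (auto intro!: exI[of _ "r *\<^sub>R x"])
qed

lemma graph_closed:
  assumes "c > 0"
  shows "closed {(x, c *\<^sub>R A x) | x. x \<in> DA}"
proof -
  let ?f = "\<lambda>p::'a\<times>'a. (fst p, (1/c) *\<^sub>R snd p)"
  have eq: "{(x, c *\<^sub>R A x) | x. x \<in> DA} = ?f -` {(x, A x) | x. x \<in> DA}"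
  proof (intro set_eqI iffI)
    fix p assume "p \<in> {(x, c *\<^sub>R A x) | x. x \<in> DA}"
    then obtain x where "p = (x, c *\<^sub>R A x)" "x \<in> DA" by blast
    then show "p \<in> ?f -` {(x, A x) | x. x \<in> DA}" using assms by auto
  next
    fix p assume "p \<in> ?f -` {(x, A x) | x. x \<in> DA}"
    then obtain x where x: "fst p = x" "(1/c) *\<^sub>R snd p = A x" "x \<in> DA" by auto
    have "snd p = c *\<^sub>R ((1/c) *\<^sub>R snd p)" using assms by simp
    then have "snd p = c *\<^sub>R A x" using x(2) by simp
    then have "p = (x, c *\<^sub>R A x)" using x(1) by (metis prod.collapse)
    then show "p \<in> {(x, c *\<^sub>R A x) | x. x \<in> DA}" using x(3) by blast
  qed
  have "closed (?f -` {(x, A x) | x. x \<in> DA})"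
    by (rule continuous_closed_vimage[OF closedA]) (intro continuous_intros)
  then show ?thesis using eq by simp
qed

lemma dec_exists:
  assumes "c > 0"
  shows "\<exists>x. decP c h1 h2 x"
proof -
  obtain m where m: "m \<in> {(x, c *\<^sub>R A x) | x. x \<in> DA}"
    and orth: "\<forall>v\<in>{(x, c *\<^sub>R A x) | x. x \<in> DA}. inner ((h1, h2) - m) v = 0"
    using proj_exists[OF graph_sub graph_closed[OF assms]] by blast
  then obtain x where x: "m = (x, c *\<^sub>R A x)" "x \<in> DA" by blast
  have "decP c h1 h2 x" unfolding decP_def
  proof (intro conjI ballI)
    fix x' assume "x' \<in> DA"
    then have "inner ((h1, h2) - m) (x', c *\<^sub>R A x') = 0" using orth by blast
    then show "inner (h1 - x) x' + inner (h2 - c *\<^sub>R A x) (c *\<^sub>R A x') = 0"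
      using x by simp
  qed (use x in auto)
  then show ?thesis by blast
qed

lemma dec_unique:
  assumes "decP c h1 h2 x" "decP c h1 h2 y"
  shows "x = y"
proof -
  have xD: "x \<in> DA" and yD: "y \<in> DA" using assms unfolding decP_def by auto
  let ?w = "x - y"
  have wD: "?w \<in> DA" using Ddiff[OF xD yD] .
  have "inner (h1 - x) ?w + inner (h2 - c *\<^sub>R A x) (c *\<^sub>R A ?w) = 0"
       "inner (h1 - y) ?w + inner (h2 - c *\<^sub>R A y) (c *\<^sub>R A ?w) = 0"
    using assms wD unfolding decP_def by auto
  moreover have "inner (h1 - x) ?w - inner (h1 - y) ?w = - inner ?w ?w"
    by (simp add: inner_diff_left)
  moreover have "inner (h2 - c *\<^sub>R A x) (c *\<^sub>R A ?w) - inner (h2 - c *\<^sub>R A y) (c *\<^sub>R A ?w)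
      = - inner (c *\<^sub>R A ?w) (c *\<^sub>R A ?w)"
    using Adiff[OF xD yD] by (simp add: inner_diff_left scaleR_diff_right)
  ultimately have "- (inner ?w ?w + inner (c *\<^sub>R A ?w) (c *\<^sub>R A ?w)) = 0"
    by linarith
  then have "inner ?w ?w = 0"
    by (smt (verit) inner_ge_zero)
  then show ?thesis by simp
qed

definition dec :: "real \<Rightarrow> 'a \<Rightarrow> 'a \<Rightarrow> 'a" where
  "dec c h1 h2 = (THE x. decP c h1 h2 x)"

lemma dec: assumes "c > 0" shows "decP c h1 h2 (dec c h1 h2)"
  unfolding dec_def using dec_exists[OF assms] dec_unique by (metis theI)

lemma dec_eqI: assumes "c > 0" "decP c h1 h2 x" shows "dec c h1 h2 = x"
  using dec[OF assms(1)] assms(2) dec_unique by blast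

end


context opA begin

lemma c_facts:
  assumes "a > 0"
  shows "1 / sqrt a > 0" "a * (1 / sqrt a) * (1 / sqrt a) = 1" "sqrt a * (1 / sqrt a) = 1"
  using assms by (auto simp: field_simps)

lemma T_surj:
  assumes a: "a > 0"
  shows "\<exists>x\<in>T_dom DA A. T_op DA A x + a *\<^sub>R x = h"
proof -
  define c where "c = 1 / sqrt a"
  have c: "c > 0" "a * c * c = 1" using c_facts[OF a] c_def by auto
  define x where "x = dec c ((1/a) *\<^sub>R h) 0"
  have dx: "decP c ((1/a) *\<^sub>R h) 0 x" unfolding x_def by (rule dec[OF c(1)])
  then have xD: "x \<in> DA" unfolding decP_def by simp
  have "\<forall>x'\<in>DA. inner (A x') (A x) = inner x' (a *\<^sub>R ((1/a) *\<^sub>R h - x))"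
  proof
    fix x' assume x': "x' \<in> DA"
    have "inner ((1/a) *\<^sub>R h - x) x' + inner (0 - c *\<^sub>R A x) (c *\<^sub>R A x') = 0"
      using dx x' unfolding decP_def by blast
    then have "inner ((1/a) *\<^sub>R h - x) x' = c * c * inner (A x) (A x')" by simp
    then have "a * inner ((1/a) *\<^sub>R h - x) x' = (a * c * c) * inner (A x) (A x')" by simp
    then show "inner (A x') (A x) = inner x' (a *\<^sub>R ((1/a) *\<^sub>R h - x))"
      using c(2) by (simp add: inner_commute)
  qed
  then have "A x \<in> adj_dom DA A" "adj DA A (A x) = a *\<^sub>R ((1/a) *\<^sub>R h - x)"
    using adj_eqI by blast+
  then have "x \<in> T_dom DA A" "T_op DA A x + a *\<^sub>R x = h"
    using xD a unfolding T_dom_def T_op_def by (auto simp: algebra_simps)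
  then show ?thesis by blast
qed

definition Lres :: "real \<Rightarrow> 'a \<Rightarrow> 'a" where
  "Lres a h = (1 / sqrt a) *\<^sub>R dec (1 / sqrt a) 0 h"

lemma Lres_bound:
  assumes a: "a > 0"
  shows "norm (Lres a h) \<le> norm h / (2 * sqrt a)"
proof -
  define c where "c = 1 / sqrt a"
  have c: "c > 0" using c_facts[OF a] c_def by auto
  define x where "x = dec c 0 h"
  have dx: "decP c 0 h x" unfolding x_def by (rule dec[OF c(1)])
  then have xD: "x \<in> DA" unfolding decP_def by simp
  have "inner (0 - x) x + inner (h - c *\<^sub>R A x) (c *\<^sub>R A x) = 0"
    using dx xD unfolding decP_def by blast
  then have "inner x x + inner (c *\<^sub>R A x) (c *\<^sub>R A x) = inner h (c *\<^sub>R A x)"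
    by (simp add: inner_diff_left inner_diff_right algebra_simps)
  then have eq: "norm x ^2 + norm (c *\<^sub>R A x)^2 = inner h (c *\<^sub>R A x)"
    by (simp only: power2_norm_eq_inner)
  have "inner h (c *\<^sub>R A x) \<le> norm h * norm (c *\<^sub>R A x)" by (rule norm_cauchy_schwarz)
  moreover have "norm h * norm (c *\<^sub>R A x) - (norm (c *\<^sub>R A x))^2 \<le> norm h ^2 / 4"
    using sum_squares_ge_zero[of "norm h / 2 - norm (c *\<^sub>R A x)" 0]
    by (simp add: power2_eq_square algebra_simps)
  ultimately have "norm x ^2 \<le> norm h ^2 / 4" using eq by linarith
  also have "norm h ^2 / 4 = (norm h / 2)^2" by (simp add: power_divide)
  finally have "norm x ^2 \<le> (norm h / 2)^2" .
  then have nx: "norm x \<le> norm h / 2"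
    using power2_le_imp_le[of "norm x" "norm h / 2"] by simp
  have "norm (Lres a h) = c * norm x" unfolding Lres_def x_def c_def using c c_def by simp
  also have "\<dots> \<le> c * (norm h / 2)" using nx c by simp
  finally show ?thesis unfolding c_def by simp
qed

lemma dec_add:
  assumes c: "c > 0"
  shows "dec c 0 (h + k) = dec c 0 h + dec c 0 k"
proof (rule dec_eqI[OF c])
  have dh: "decP c 0 h (dec c 0 h)" and dk: "decP c 0 k (dec c 0 k)" using dec[OF c] by auto
  let ?x = "dec c 0 h" and ?y = "dec c 0 k"
  have xD: "?x \<in> DA" and yD: "?y \<in> DA" using dh dk unfolding decP_def by auto
  show "decP c 0 (h + k) (?x + ?y)" unfolding decP_def
  proof (intro conjI ballI)
    show "?x + ?y \<in> DA" using Dadd[OF xD yD] .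
    fix x' assume x': "x' \<in> DA"
    have "inner (0 - ?x) x' + inner (h - c *\<^sub>R A ?x) (c *\<^sub>R A x') = 0"
         "inner (0 - ?y) x' + inner (k - c *\<^sub>R A ?y) (c *\<^sub>R A x') = 0"
      using dh dk x' unfolding decP_def by auto
    moreover have "inner (0 - (?x + ?y)) x' + inner (h + k - c *\<^sub>R A (?x + ?y)) (c *\<^sub>R A x') =
      (inner (0 - ?x) x' + inner (h - c *\<^sub>R A ?x) (c *\<^sub>R A x')) + (inner (0 - ?y) x' + inner (k - c *\<^sub>R A ?y) (c *\<^sub>R A x'))"
      unfolding Aadd[OF xD yD] by (simp add: inner_diff_left inner_add_left scaleR_add_right) (simp add: algebra_simps)
    ultimately show "inner (0 - (?x + ?y)) x' + inner (h + k - c *\<^sub>R A (?x + ?y)) (c *\<^sub>R A x') = 0"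
      by linarith
  qed
qed

lemma dec_scale:
  assumes c: "c > 0"
  shows "dec c 0 (r *\<^sub>R h) = r *\<^sub>R dec c 0 h"
proof (rule dec_eqI[OF c])
  have dh: "decP c 0 h (dec c 0 h)" using dec[OF c] by auto
  let ?x = "dec c 0 h"
  have xD: "?x \<in> DA" using dh unfolding decP_def by auto
  show "decP c 0 (r *\<^sub>R h) (r *\<^sub>R ?x)" unfolding decP_def
  proof (intro conjI ballI)
    show "r *\<^sub>R ?x \<in> DA" using Dscale[OF xD] .
    fix x' assume x': "x' \<in> DA"
    have "inner (0 - ?x) x' + inner (h - c *\<^sub>R A ?x) (c *\<^sub>R A x') = 0"
      using dh x' unfolding decP_def by auto
    then have "r * (inner (0 - ?x) x' + inner (h - c *\<^sub>R A ?x) (c *\<^sub>R A x')) = 0" by simp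
    then show "inner (0 - r *\<^sub>R ?x) x' + inner (r *\<^sub>R h - c *\<^sub>R A (r *\<^sub>R ?x)) (c *\<^sub>R A x') = 0"
      using Ascale[OF xD, of r] by (simp add: inner_diff_left algebra_simps)
  qed
qed

lemma Lres_linear:
  assumes a: "a > 0"
  shows "bounded_linear (Lres a)"
proof -
  have c: "1 / sqrt a > 0" using c_facts[OF a] by auto
  show ?thesis
  proof (rule bounded_linear_intro[where K = "1 / (2 * sqrt a)"])
    fix x y show "Lres a (x + y) = Lres a x + Lres a y"
      unfolding Lres_def using dec_add[OF c] by (simp add: scaleR_add_right)
  next
    fix r x show "Lres a (r *\<^sub>R x) = r *\<^sub>R Lres a x"
      unfolding Lres_def using dec_scale[OF c] by simp
  next
    fix x show "norm (Lres a x) \<le> norm x * (1 / (2 * sqrt a))"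
      using Lres_bound[OF a, of x] by simp
  qed
qed

lemma Lres_adj:
  assumes a: "a > 0" and y: "y \<in> adj_dom DA A"
  shows "Lres a y \<in> T_dom DA A \<and> T_op DA A (Lres a y) + a *\<^sub>R Lres a y = adj DA A y"
proof -
  define c where "c = 1 / sqrt a"
  have c: "c > 0" "a * c * c = 1" using c_facts[OF a] c_def by auto
  define x where "x = dec c 0 y"
  have dx: "decP c 0 y x" unfolding x_def by (rule dec[OF c(1)])
  then have xD: "x \<in> DA" unfolding decP_def by simp
  have "\<forall>x'\<in>DA. inner (A x') (y - c *\<^sub>R A x) = inner x' ((1/c) *\<^sub>R x)"
  proof
    fix x' assume x': "x' \<in> DA"
    have "inner (0 - x) x' + inner (y - c *\<^sub>R A x) (c *\<^sub>R A x') = 0"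
      using dx x' unfolding decP_def by blast
    then have "c * inner (A x') (y - c *\<^sub>R A x) = inner x' x" by (simp add: inner_commute)
    then show "inner (A x') (y - c *\<^sub>R A x) = inner x' ((1/c) *\<^sub>R x)"
      using c(1) by (simp add: field_simps)
  qed
  then have v: "y - c *\<^sub>R A x \<in> adj_dom DA A" "adj DA A (y - c *\<^sub>R A x) = (1/c) *\<^sub>R x"
    using adj_eqI by blast+
  have e: "y - (y - c *\<^sub>R A x) = c *\<^sub>R A x" by simp
  have cAx: "c *\<^sub>R A x \<in> adj_dom DA A" "adj DA A (c *\<^sub>R A x) = adj DA A y - (1/c) *\<^sub>R x"
    using adj_diff[OF y v(1)] unfolding e v(2) by auto
  have e2: "(1/c) *\<^sub>R (c *\<^sub>R A x) = A x" using c by simp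
  have Ax: "A x \<in> adj_dom DA A" "adj DA A (A x) = (1/c) *\<^sub>R (adj DA A y - (1/c) *\<^sub>R x)"
    using adj_scale[OF cAx(1), of "1/c"] unfolding e2 cAx(2) by auto
  have xT: "x \<in> T_dom DA A" using xD Ax(1) unfolding T_dom_def by simp
  have L: "Lres a y = c *\<^sub>R x" unfolding Lres_def x_def c_def by simp
  have "T_op DA A (c *\<^sub>R x) + a *\<^sub>R (c *\<^sub>R x) = c *\<^sub>R T_op DA A x + (a * c) *\<^sub>R x"
    using T_scale[OF xT] by simp
  also have "\<dots> = adj DA A y - (1/c) *\<^sub>R x + (a * c) *\<^sub>R x"
    using Ax(2) c(1) unfolding T_op_def by (simp add: scaleR_diff_right)
  also have "a * c = 1 / c" using c by (simp add: field_simps)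
  finally show ?thesis using L T_scale(1)[OF xT] by simp
qed

lemma Lres_A:
  assumes a: "a > 0" and y: "y \<in> DA" and x': "x' \<in> T_dom DA A"
    and eq: "T_op DA A x' + a *\<^sub>R x' = y"
  shows "Lres a (A y) = y - a *\<^sub>R x'"
proof -
  define c where "c = 1 / sqrt a"
  have c: "c > 0" "a * c * c = 1" using c_facts[OF a] c_def by auto
  have x'D: "x' \<in> DA" using Tdom_D[OF x'] .
  define x0 where "x0 = (1/c) *\<^sub>R (y - a *\<^sub>R x')"
  have uD: "y - a *\<^sub>R x' \<in> DA" using Ddiff[OF y Dscale[OF x'D]] .
  have cAx0: "c *\<^sub>R A x0 = A y - a *\<^sub>R A x'"
    unfolding x0_def using Ascale[OF uD, of "1/c"] Adiff[OF y Dscale[OF x'D]] Ascale[OF x'D] c(1) by simp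
  have "decP c 0 (A y) x0" unfolding decP_def
  proof (intro conjI ballI)
    show "x0 \<in> DA" unfolding x0_def using Dscale[OF uD] .
    fix x'' assume x'': "x'' \<in> DA"
    have "inner (A y - c *\<^sub>R A x0) (c *\<^sub>R A x'') = (a * c) * inner (A x') (A x'')"
      using cAx0 by simp
    also have "\<dots> = (a * c) * inner (y - a *\<^sub>R x') x''"
      using T_form[OF x' x''] eq[symmetric] by (simp add: algebra_simps)
    also have "a * c = 1 / c" using c by (simp add: field_simps)
    finally have "inner (A y - c *\<^sub>R A x0) (c *\<^sub>R A x'') = inner x0 x''"
      unfolding x0_def by simp
    then show "inner (0 - x0) x'' + inner (A y - c *\<^sub>R A x0) (c *\<^sub>R A x'') = 0" by simp
  qed
  then have "dec c 0 (A y) = x0" by (rule dec_eqI[OF c(1)])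
  then show ?thesis unfolding Lres_def c_def[symmetric] x0_def using c(1) by simp
qed

lemma adj_dom_orth:
  assumes "\<And>y. y \<in> adj_dom DA A \<Longrightarrow> inner y z = 0"
  shows "z = 0"
proof -
  define x where "x = dec 1 0 z"
  have dx: "decP 1 0 z x" unfolding x_def by (rule dec) simp
  then have xD: "x \<in> DA" unfolding decP_def by simp
  have "\<forall>x'\<in>DA. inner (A x') (z - A x) = inner x' x"
  proof
    fix x' assume x': "x' \<in> DA"
    have "inner (0 - x) x' + inner (z - 1 *\<^sub>R A x) (1 *\<^sub>R A x') = 0"
      using dx x' unfolding decP_def by blast
    then show "inner (A x') (z - A x) = inner x' x" by (simp add: inner_commute)
  qed
  then have v: "z - A x \<in> adj_dom DA A" "adj DA A (z - A x) = x" using adj_eqI by blast+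
  have e1: "inner (A x) (z - A x) = inner x x" using adj_prop[OF v(1)] xD v(2) by simp
  have e2: "inner z (z - A x) = 0" using assms[OF v(1)] by (simp add: inner_commute)
  have "inner (z - A x) (z - A x) = inner z (z - A x) - inner (A x) (z - A x)"
    by (simp add: inner_diff_left)
  then have "inner (z - A x) (z - A x) + inner x x = 0" using e1 e2 by simp
  then have "inner x x = 0" "inner (z - A x) (z - A x) = 0"
    by (smt (verit) inner_ge_zero)+
  then show ?thesis using A0 by simp
qed

lemma Rop_eq:
  assumes a: "a > 0"
  shows "Rop DA A a = Lres a"
proof -
  let ?P = "\<lambda>L. bounded_linear L \<and>
      (\<forall>y\<in>adj_dom DA A. L y \<in> T_dom DA A \<and> T_op DA A (L y) + a *\<^sub>R L y = adj DA A y)"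
  have P0: "?P (Lres a)" using Lres_linear[OF a] Lres_adj[OF a] by blast
  have uniq: "L = Lres a" if PL: "?P L" for L
  proof -
    have bl: "bounded_linear L" using PL by blast
    have agree: "L y = Lres a y" if y: "y \<in> adj_dom DA A" for y
      using Ta_inj[OF a, of "L y" "Lres a y"] PL y Lres_adj[OF a y] by auto
    let ?S = "{h. L h = Lres a h}"
    have sub: "subspace ?S"
      using bounded_linear.linear[OF bl] bounded_linear.linear[OF Lres_linear[OF a]]
      unfolding subspace_def by (auto simp: linear_add linear_scale linear_0)
    have cl: "closed ?S"
      by (intro closed_Collect_eq bounded_linear.continuous_on[OF bl] bounded_linear.continuous_on[OF Lres_linear[OF a]] continuous_on_id)
    have "h \<in> ?S" for h
    proof -
      obtain m where m: "m \<in> ?S" "\<forall>v\<in>?S. inner (h - m) v = 0" using proj_exists[OF sub cl] by blast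
      have "h - m = 0"
        by (rule adj_dom_orth) (use m agree in \<open>auto simp: inner_commute\<close>)
      then show ?thesis using m by simp
    qed
    then show ?thesis by auto
  qed
  show ?thesis unfolding Rop_def
    by (rule the_equality[of ?P, OF P0]) (use uniq in blast)
qed

end


locale specA = opA DA A for DA :: "'a::{real_inner,complete_space} set" and A +
  fixes E :: "real \<Rightarrow> 'a \<Rightarrow> 'a"
  assumes E: "resolution_of_identity E (T_dom DA A) (T_op DA A)"
begin

lemma Ebl: "bounded_linear (E s)" using E unfolding resolution_of_identity_def by blast
lemma Eidem: "E s (E s x) = E s x" using E unfolding resolution_of_identity_def by blast
lemma Esa: "inner (E s x) y = inner x (E s y)" using E unfolding resolution_of_identity_def by blast
lemma Emono: "s \<le> t \<Longrightarrow> E s (E t x) = E s x" using E unfolding resolution_of_identity_def by blast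
lemma Eright: "((\<lambda>t. E t x) \<longlongrightarrow> E s x) (at_right s)" using E unfolding resolution_of_identity_def by blast
lemma Ebot: "((\<lambda>t. E t x) \<longlongrightarrow> 0) at_bot" using E unfolding resolution_of_identity_def by blast
lemma Etop: "((\<lambda>t. E t x) \<longlongrightarrow> x) at_top" using E unfolding resolution_of_identity_def by blast
lemma TDeq: "T_dom DA A = {u. (\<integral>\<^sup>+ s. ennreal (s\<^sup>2) \<partial>spec_meas E u) < \<infinity>}"
  using E unfolding resolution_of_identity_def by blast
lemma Tpol: "u \<in> T_dom DA A \<Longrightarrow> v \<in> T_dom DA A \<Longrightarrow> inner (T_op DA A u) v =
        (integral\<^sup>L (spec_meas E (u + v)) (\<lambda>s. s) - integral\<^sup>L (spec_meas E (u - v)) (\<lambda>s. s)) / 4"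
  using E unfolding resolution_of_identity_def by blast

lemma Eadd: "E s (x + y) = E s x + E s y" using Ebl[of s] by (simp add: bounded_linear.linear linear_add)
lemma Ediff: "E s (x - y) = E s x - E s y" using Ebl[of s] by (simp add: bounded_linear.linear linear_diff)
lemma Escale: "E s (c *\<^sub>R x) = c *\<^sub>R E s x" using Ebl[of s] by (simp add: bounded_linear.linear linear_scale)
lemma E0: "E s 0 = 0" using Ebl[of s] by (simp add: bounded_linear.linear linear_0)

lemma inner_ext: "(\<And>v. inner a v = inner b v) \<Longrightarrow> a = b"
  by (metis inner_diff_left inner_eq_zero_iff right_minus_eq)

lemma Emono2: "s \<le> t \<Longrightarrow> E t (E s x) = E s x"
proof (rule inner_ext)
  fix v assume st: "s \<le> t"
  have "inner (E t (E s x)) v = inner x (E s (E t v))" by (simp add: Esa)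
  also have "\<dots> = inner (E s x) v" using Emono[OF st] by (simp add: Esa)
  finally show "inner (E t (E s x)) v = inner (E s x) v" .
qed

lemma Emin: "E r (E t x) = E (min r t) x"
  by (cases "r \<le> t") (auto simp: Emono Emono2 min_def)

definition F :: "'a \<Rightarrow> real \<Rightarrow> real" where "F u r = inner (E r u) u"

lemma spec_F: "spec_meas E u = interval_measure (F u)"
  unfolding spec_meas_def F_def by (rule arg_cong[where f = interval_measure]) auto

lemma F_norm: "F u r = norm (E r u)^2"
proof -
  have "inner (E r u) u = inner (E r (E r u)) u" by (simp add: Eidem)
  also have "\<dots> = inner (E r u) (E r u)" by (simp add: Esa)
  finally show ?thesis unfolding F_def by (simp add: power2_norm_eq_inner)
qed

lemma F_nonneg: "F u r \<ge> 0" by (simp add: F_norm)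

lemma E_contract: "norm (E r w) \<le> norm w"
proof -
  have "inner (E r w) (w - E r w) = 0"
    by (simp add: inner_diff_right Esa[symmetric] Eidem)
  then have "norm (E r w + (w - E r w))^2 = norm (E r w)^2 + norm (w - E r w)^2"
    by (intro norm_add_Pythagorean) (simp add: orthogonal_def)
  then have "norm w ^2 = norm (E r w)^2 + norm (w - E r w)^2" by simp
  then have "norm (E r w)^2 \<le> norm w ^2" by simp
  then show ?thesis by (rule power2_le_imp_le) simp
qed

lemma F_mono: "s \<le> t \<Longrightarrow> F u s \<le> F u t"
proof -
  assume st: "s \<le> t"
  have "norm (E s u) = norm (E s (E t u))" using Emono[OF st] by simp
  also have "\<dots> \<le> norm (E t u)" by (rule E_contract)
  finally show ?thesis unfolding F_norm by (simp add: power_mono)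
qed

lemma F_rc: "continuous (at_right a) (F u)"
  unfolding continuous_within F_def
  by (intro tendsto_intros Eright)

lemma meas_Ioc: "s \<le> t \<Longrightarrow> emeasure (spec_meas E u) {s<..t} = ennreal (F u t - F u s)"
  unfolding spec_F by (rule emeasure_interval_measure_Ioc) (auto intro: F_mono F_rc)

lemma sets_spec[simp]: "sets (spec_meas E u) = sets borel" unfolding spec_F by simp
lemma space_spec[simp]: "space (spec_meas E u) = UNIV" unfolding spec_F by simp

lemma band_inner: "a \<le> b \<Longrightarrow> inner x (E b x - E a x) = norm (E b x - E a x)^2"
proof -
  assume ab: "a \<le> b"
  have "norm (E b x - E a x)^2 = inner (E b x) (E b x) - 2 * inner (E b x) (E a x) + inner (E a x) (E a x)"
    by (simp add: power2_norm_eq_inner inner_diff inner_commute)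
  also have "inner (E b x) (E b x) = inner x (E b x)" using Esa[of b x "E b x"] Eidem by simp
  also have "inner (E a x) (E a x) = inner x (E a x)" using Esa[of a x "E a x"] Eidem by simp
  also have "inner (E b x) (E a x) = inner x (E a x)" using Esa[of b x "E a x"] Emono2[OF ab] by simp
  finally show ?thesis by (simp add: inner_diff_right)
qed

lemma band_norm: "a \<le> b \<Longrightarrow> norm (E b x - E a x)^2 = F x b - F x a"
  using band_inner[of a b x] unfolding F_def by (simp add: inner_diff_right inner_commute)

lemma band_F_low: "s \<le> t \<Longrightarrow> r \<le> s \<Longrightarrow> F (E t u - E s u) r = 0"
  unfolding F_norm by (simp add: Ediff Emin min_def)

lemma band_F_high: "s \<le> t \<Longrightarrow> t \<le> r \<Longrightarrow> F (E t u - E s u) r = norm (E t u - E s u)^2"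
  unfolding F_norm by (simp add: Ediff Emin min_def)

lemma band_null:
  fixes s t :: real and u :: 'a
  assumes st: "s \<le> t"
  defines "z \<equiv> E t u - E s u"
  shows "UNIV - {s<..t} \<in> null_sets (spec_meas E z)"
proof -
  let ?M = "spec_meas E z"
  have lo: "{s - real n<..s} \<in> null_sets ?M" for n
  proof -
    have "emeasure ?M {s - real n<..s} = ennreal (F z s - F z (s - real n))"
      by (rule meas_Ioc) simp
    also have "\<dots> = 0" unfolding z_def using st by (simp add: band_F_low)
    finally show ?thesis by (intro null_setsI) auto
  qed
  have hi: "{t<..t + real n} \<in> null_sets ?M" for n
  proof -
    have "emeasure ?M {t<..t + real n} = ennreal (F z (t + real n) - F z t)"
      by (rule meas_Ioc) simp
    also have "\<dots> = 0" unfolding z_def using st by (simp add: band_F_high)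
    finally show ?thesis by (intro null_setsI) auto
  qed
  have e1: "{..s} = (\<Union>n. {s - real n<..s})"
  proof (auto)
    fix x assume "x \<le> s"
    obtain n :: nat where "s - x < real n" using reals_Archimedean2 by blast
    then show "\<exists>n. s - real n < x" by (intro exI[of _ n]) simp
  qed
  have e2: "{t<..} = (\<Union>n. {t<..t + real n})"
  proof (auto)
    fix x assume "t < x"
    obtain n :: nat where "x - t < real n" using reals_Archimedean2 by blast
    then show "\<exists>n. x \<le> t + real n" by (intro exI[of _ n]) simp
  qed
  have "{..s} \<in> null_sets ?M" unfolding e1 by (rule null_sets_UN[OF lo])
  moreover have "{t<..} \<in> null_sets ?M" unfolding e2 by (rule null_sets_UN[OF hi])
  moreover have "UNIV - {s<..t} = {..s} \<union> {t<..}" by auto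
  ultimately show ?thesis by auto
qed

lemma band_total:
  fixes s t :: real and u :: 'a
  assumes st: "s \<le> t"
  defines "z \<equiv> E t u - E s u"
  shows "emeasure (spec_meas E z) UNIV = ennreal (norm z ^2)"
proof -
  have "emeasure (spec_meas E z) (UNIV - (UNIV - {s<..t})) = emeasure (spec_meas E z) UNIV"
    by (rule emeasure_Diff_null_set[OF band_null[OF st, of u, folded z_def]]) simp
  moreover have "UNIV - (UNIV - {s<..t}) = {s<..t}" by auto
  moreover have "emeasure (spec_meas E z) {s<..t} = ennreal (F z t - F z s)" by (rule meas_Ioc[OF st])
  moreover have "F z t - F z s = norm z ^2" unfolding z_def using st by (simp add: band_F_high band_F_low)
  ultimately show ?thesis by simp
qed

lemma band_AE:
  fixes s t :: real and u :: 'a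
  assumes st: "s \<le> t"
  defines "z \<equiv> E t u - E s u"
  shows "AE x in spec_meas E z. s < x \<and> x \<le> t"
  by (rule AE_I'[OF band_null[OF st, of u, folded z_def]]) auto

end

context specA begin
lemma band_finite:
  fixes s t :: real and u :: 'a
  assumes st: "s \<le> t"
  defines "z \<equiv> E t u - E s u"
  shows "finite_measure (spec_meas E z)"
  by (rule finite_measureI) (use band_total[OF st, of u] in \<open>simp add: z_def\<close>)

lemma band_TD:
  fixes s t :: real and u :: 'a
  assumes st: "s \<le> t"
  defines "z \<equiv> E t u - E s u"
  shows "z \<in> T_dom DA A"
proof -
  let ?M = "spec_meas E z"
  let ?B = "max (s^2) (t^2)"
  have "AE x in ?M. ennreal (x^2) \<le> ennreal ?B"
    using band_AE[OF st, of u, folded z_def]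
  proof (rule eventually_mono)
    fix x assume "s < x \<and> x \<le> t"
    then have sx: "s < x" "x \<le> t" by auto
    have "x^2 \<le> ?B"
    proof (cases "x \<ge> 0")
      case True
      then have "x^2 \<le> t^2" using sx by (intro power_mono) auto
      then show ?thesis by simp
    next
      case False
      then have "(-x)^2 \<le> (-s)^2" using sx by (intro power_mono) auto
      then show ?thesis by simp
    qed
    then show "ennreal (x^2) \<le> ennreal ?B" by (rule ennreal_leI)
  qed
  then have "(\<integral>\<^sup>+ x. ennreal (x^2) \<partial>?M) \<le> (\<integral>\<^sup>+ x. ennreal ?B \<partial>?M)" by (rule nn_integral_mono_AE)
  also have "\<dots> = ennreal ?B * emeasure ?M UNIV" by (simp add: nn_integral_const)
  also have "\<dots> < \<infinity>" using band_total[OF st, of u] unfolding z_def by (simp add: ennreal_mult_less_top)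
  finally show ?thesis unfolding TDeq by simp
qed

lemma band_int:
  fixes s t :: real and u :: 'a
  assumes st: "s \<le> t"
  defines "z \<equiv> E t u - E s u"
  shows "s * norm z ^2 \<le> integral\<^sup>L (spec_meas E z) (\<lambda>x. x)"
    "integral\<^sup>L (spec_meas E z) (\<lambda>x. x) \<le> t * norm z ^2"
proof -
  let ?M = "spec_meas E z"
  have fm: "finite_measure ?M" using band_finite[OF st, of u] unfolding z_def .
  have AE: "AE x in ?M. s < x \<and> x \<le> t" using band_AE[OF st, of u] unfolding z_def .
  have meas: "measure ?M UNIV = norm z ^2"
    using band_total[OF st, of u] unfolding z_def by (simp add: measure_def)
  have "AE x in ?M. norm x \<le> max \<bar>s\<bar> \<bar>t\<bar>" using AE by (rule eventually_mono) auto
  then have int: "integrable ?M (\<lambda>x. x)"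
    by (rule finite_measure.integrable_const_bound[OF fm]) (rule measurable_ident_sets, simp)
  have ic: "integrable ?M (\<lambda>x. c)" for c :: real
    by (rule finite_measure.integrable_const_bound[OF fm, where B = "\<bar>c\<bar>"]) (simp_all)
  have "integral\<^sup>L ?M (\<lambda>x. s) \<le> integral\<^sup>L ?M (\<lambda>x. x)"
    by (rule integral_mono_AE[OF ic int]) (use AE in \<open>rule eventually_mono, auto\<close>)
  then show "s * norm z ^2 \<le> integral\<^sup>L ?M (\<lambda>x. x)" using meas by (simp add: mult.commute)
  have "integral\<^sup>L ?M (\<lambda>x. x) \<le> integral\<^sup>L ?M (\<lambda>x. t)"
    by (rule integral_mono_AE[OF int ic]) (use AE in \<open>rule eventually_mono, auto\<close>)
  then show "integral\<^sup>L ?M (\<lambda>x. x) \<le> t * norm z ^2" using meas by (simp add: mult.commute)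
qed


lemma Tz_bounds:
  fixes s t :: real and u :: 'a
  assumes st: "s \<le> t"
  defines "z \<equiv> E t u - E s u"
  shows "s * norm z ^2 \<le> inner (T_op DA A z) z" "inner (T_op DA A z) z \<le> t * norm z ^2"
proof -
  have zT: "z \<in> T_dom DA A" unfolding z_def by (rule band_TD[OF st])
  have e1: "z + z = E t (u + u) - E s (u + u)" unfolding z_def by (simp add: Eadd)
  have e2: "z - z = E t 0 - E s 0" by (simp add: E0)
  have pol: "inner (T_op DA A z) z = (integral\<^sup>L (spec_meas E (z + z)) (\<lambda>s. s) - integral\<^sup>L (spec_meas E (z - z)) (\<lambda>s. s)) / 4"
    by (rule Tpol[OF zT zT])
  have n2: "norm (z + z)^2 = 4 * norm z ^2"
  proof -
    have "z + z = 2 *\<^sub>R z" by (simp add: scaleR_2)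
    then show ?thesis by (simp add: power2_eq_square)
  qed
  have i1: "s * norm (z + z)^2 \<le> integral\<^sup>L (spec_meas E (z + z)) (\<lambda>x. x)"
           "integral\<^sup>L (spec_meas E (z + z)) (\<lambda>x. x) \<le> t * norm (z + z)^2"
    using band_int[OF st, of "u + u"] unfolding e1 by auto
  have i0: "s * norm (z - z)^2 \<le> integral\<^sup>L (spec_meas E (z - z)) (\<lambda>x. x)"
           "integral\<^sup>L (spec_meas E (z - z)) (\<lambda>x. x) \<le> t * norm (z - z)^2"
    using band_int[OF st, of 0] unfolding e2 by auto
  then have i0': "integral\<^sup>L (spec_meas E (z - z)) (\<lambda>x. x) = 0" by simp
  show "s * norm z ^2 \<le> inner (T_op DA A z) z" using pol i1(1) i0' n2 by simp
  show "inner (T_op DA A z) z \<le> t * norm z ^2" using pol i1(2) i0' n2 by simp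
qed

lemma orth_T:
  assumes w: "w \<in> T_dom DA A" and z: "z \<in> T_dom DA A"
    and orth: "\<And>r. inner (E r w) (E r z) = 0"
  shows "inner (T_op DA A w) z = 0"
proof -
  have "F (w + z) = F (w - z)"
  proof
    fix r
    show "F (w + z) r = F (w - z) r"
      unfolding F_norm power2_norm_eq_inner using orth[of r]
      by (simp add: Eadd Ediff inner_add inner_diff inner_commute)
  qed
  then have "spec_meas E (w + z) = spec_meas E (w - z)" by (simp add: spec_F)
  then show ?thesis using Tpol[OF w z] by simp
qed

lemma band_orth_r:
  assumes "a \<le> b" "b \<le> r"
  shows "inner (E r x - (E b x - E a x)) (E b x - E a x) = 0"
proof -
  have "inner (E r x) (E b x - E a x) = inner x (E r (E b x - E a x))" by (simp add: Esa)
  also have "\<dots> = inner x (E b x - E a x)" using assms by (simp add: Ediff Emono2)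
  also have "\<dots> = norm (E b x - E a x)^2" using band_inner[OF assms(1)] .
  finally show ?thesis by (simp add: inner_diff_left power2_norm_eq_inner)
qed

lemma band_ineq:
  fixes s t a :: real and x :: 'a
  assumes st: "s \<le> t" and xT: "x \<in> T_dom DA A"
  defines "z \<equiv> E t x - E s x"
  defines "y \<equiv> T_op DA A x + a *\<^sub>R x"
  shows "inner (T_op DA A z) z + a * norm z ^2 \<le> norm (E t y - E s y) * norm z"
proof -
  have zT: "z \<in> T_dom DA A" unfolding z_def by (rule band_TD[OF st])
  let ?w = "x - z"
  have wT: "?w \<in> T_dom DA A" using T_diff(1)[OF xT zT] .
  have orth: "inner (E r ?w) (E r z) = 0" for r
  proof -
    have Erz: "E r z = E (min r t) x - E (min r s) x" unfolding z_def by (simp add: Ediff Emin)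
    have "inner (E r x - E r z) (E r z) = 0"
      unfolding Erz by (rule band_orth_r) (use st in auto)
    then show ?thesis by (simp add: Ediff)
  qed
  have Tx: "T_op DA A x = T_op DA A ?w + T_op DA A z"
    using T_add(2)[OF wT zT] by simp
  have "inner (T_op DA A x) z = inner (T_op DA A z) z"
    using orth_T[OF wT zT orth] Tx by (simp add: inner_add_left)
  moreover have "inner x z = norm z ^2" unfolding z_def by (rule band_inner[OF st])
  ultimately have iy: "inner y z = inner (T_op DA A z) z + a * norm z ^2"
    unfolding y_def by (simp add: inner_add_left)
  have Pz: "E t z - E s z = z" unfolding z_def using st by (simp add: Ediff Eidem Emono Emono2)
  have "inner (E t y - E s y) z = inner y (E t z - E s z)" by (simp add: inner_diff_left inner_diff_right Esa)
  then have "inner (E t y - E s y) z = inner y z" using Pz by simp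
  moreover have "inner (E t y - E s y) z \<le> norm (E t y - E s y) * norm z" by (rule norm_cauchy_schwarz)
  ultimately show ?thesis using iy by simp
qed

lemma NEG:
  assumes r: "r < 0"
  shows "E r u = 0"
proof -
  have eq: "E r' u = E r u" if r': "r' < r" for r'
  proof -
    let ?z = "E r u - E r' u"
    have zT: "?z \<in> T_dom DA A" by (rule band_TD) (use r' in simp)
    have "inner (T_op DA A ?z) ?z \<le> r * norm ?z ^2" by (rule Tz_bounds(2)) (use r' in simp)
    moreover have "inner (T_op DA A ?z) ?z \<ge> 0" using T_pos[OF zT] by simp
    ultimately have "r * norm ?z ^2 \<ge> 0" by linarith
    then have "norm ?z ^2 \<le> 0" using r by (simp add: mult_le_0_iff zero_le_mult_iff)
    then show ?thesis by simp
  qed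
  have "eventually (\<lambda>t. t < r) at_bot" unfolding eventually_at_bot_dense by blast
  then have ev: "eventually (\<lambda>t. E t u = E r u) at_bot" by (rule eventually_mono) (use eq in auto)
  have "((\<lambda>t::real. E r u) \<longlongrightarrow> 0) at_bot"
    using Lim_transform_eventually[OF Ebot[of u] ev] .
  then show ?thesis by (simp add: tendsto_const_iff)
qed

end


lemma amgm_bound:
  fixes s a p :: real
  assumes s: "s > 0" and a: "a > 0" and p: "0 < p" "p < 1"
  shows "a / (s + a) \<le> c_p p * a powr p * s powr (- p)"
proof -
  have Y: "(s/p) powr p * (a/(1-p)) powr (1-p) \<le> p * (s/p) + (1-p) * (a/(1-p))"
    by (rule Youngs_inequality_0) (use s a p in auto)
  have r: "p * (s/p) + (1-p) * (a/(1-p)) = s + a" using p by simp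
  have l: "(s/p) powr p * (a/(1-p)) powr (1-p) = s powr p * a powr (1-p) / c_p p"
    unfolding c_p_def using s a p by (simp add: powr_divide)
  have cpos: "c_p p > 0" unfolding c_p_def using p by simp
  have key: "s powr p * a powr (1-p) \<le> c_p p * (s + a)"
    using Y r l cpos by (simp add: divide_le_eq mult.commute)
  have aeq: "a = a powr p * a powr (1-p)" using a by (simp add: powr_add[symmetric])
  have "a * s powr p = a powr p * (s powr p * a powr (1-p))"
    by (subst aeq) (simp add: algebra_simps)
  also have "\<dots> \<le> a powr p * (c_p p * (s + a))"
    using key a by (intro mult_left_mono) auto
  finally have m: "a * s powr p \<le> c_p p * a powr p * (s + a)" by (simp add: algebra_simps)
  have sp: "s powr p > 0" using s by simp
  have "a / (s + a) = (a * s powr p) / ((s + a) * s powr p)"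
    using sp by (simp add: nonzero_mult_divide_mult_cancel_right)
  also have "\<dots> \<le> (c_p p * a powr p * (s + a)) / ((s + a) * s powr p)"
    using m s a sp by (intro divide_right_mono) auto
  also have "\<dots> = (c_p p * a powr p) * ((s + a) / ((s + a) * s powr p))" by simp
  also have "(s + a) / ((s + a) * s powr p) = 1 / s powr p" using s a by simp
  also have "1 / s powr p = s powr (-p)" by (simp add: powr_minus_divide)
  finally show ?thesis .
qed

lemma amgm_sq:
  fixes s a p :: real
  assumes s: "s > 0" and a: "a > 0" and p: "0 < p" "p < 1"
  shows "(a / (s + a))^2 \<le> (c_p p * a powr p)^2 * s powr (- 2 * p)"
proof -
  have "(a / (s + a))^2 \<le> (c_p p * a powr p * s powr (- p))^2"
    using amgm_bound[OF assms] s a by (intro power_mono) auto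
  also have "\<dots> = (c_p p * a powr p)^2 * s powr (- 2 * p)"
    using s by (simp add: power_mult_distrib powr_powr[symmetric] power2_eq_square powr_add[symmetric])
  finally show ?thesis .
qed

lemma sq_helper:
  fixes \<alpha> \<beta> n :: real
  assumes "\<alpha> \<ge> 0" "\<beta> \<ge> 0" "n \<ge> 0" "\<alpha> * n^2 \<le> \<beta> * n"
  shows "\<alpha>^2 * n^2 \<le> \<beta>^2"
proof (cases "n = 0")
  case True then show ?thesis by simp
next
  case False
  then have "n > 0" using assms(3) by simp
  then have "\<alpha> * n \<le> \<beta>" using assms(4) by (simp add: power2_eq_square)
  then have "(\<alpha> * n)^2 \<le> \<beta>^2" using assms by (intro power_mono) auto
  then show ?thesis by (simp add: power_mult_distrib)
qed

context specA begin

lemma F_K0: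
  assumes y: "y \<in> Kset E p k"
  shows "F y 0 = 0"
proof -
  let ?M = "spec_meas E y"
  let ?f = "\<lambda>s::real. if s = 0 then \<infinity> else ennreal (s powr (-2 * p))"
  have K: "(\<integral>\<^sup>+ s. ?f s * indicator {0..} s \<partial>?M) \<le> ennreal (k^2)"
    using y unfolding Kset_def by simp
  have "(\<integral>\<^sup>+ s. \<infinity> * indicator {0} s \<partial>?M) \<le> (\<integral>\<^sup>+ s. ?f s * indicator {0..} s \<partial>?M)"
    by (intro nn_integral_mono) (auto simp: indicator_def)
  moreover have "(\<integral>\<^sup>+ s. \<infinity> * indicator {0} s \<partial>?M) = \<infinity> * emeasure ?M {0}"
    by (rule nn_integral_cmult_indicator) simp
  ultimately have "\<infinity> * emeasure ?M {0} \<le> ennreal (k^2)" using K by simp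
  then have z0: "emeasure ?M {0} = 0"
    by (auto simp: ennreal_top_mult top_unique split: if_splits)
  have Fm1: "F y (-1) = 0" unfolding F_norm using NEG[of "-1" y] by simp
  have Fneg: "F y r = 0" if "r < 0" for r unfolding F_norm using NEG[OF that] by simp
  have nul: "{-1<..-1/(real n + 1)} \<in> null_sets ?M" for n :: nat
  proof -
    have le: "-1 \<le> -1/(real n + 1)" by (simp add: field_simps)
    have "emeasure ?M {-1<..-1/(real n + 1)} = ennreal (F y (-1/(real n + 1)) - F y (-1))"
      by (rule meas_Ioc[OF le])
    also have "\<dots> = 0" using Fm1 Fneg[of "-1/(real n + 1)"] by (simp add: divide_pos_pos)
    finally show ?thesis by (intro null_setsI) auto
  qed
  have cov: "{-1<..0} \<subseteq> (\<Union>n. {-1<..-1/(real n + 1)}) \<union> {0}"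
  proof
    fix x :: real assume x: "x \<in> {-1<..0}"
    show "x \<in> (\<Union>n. {-1<..-1/(real n + 1)}) \<union> {0}"
    proof (cases "x = 0")
      case False
      then have xn: "x < 0" "-1 < x" using x by auto
      obtain n :: nat where n: "-1/x < real n" using reals_Archimedean2 by blast
      have "-1/x > 0" using xn by (simp add: divide_neg_neg)
      then have "1 < (real n + 1) * (-x)" using n xn by (simp add: field_simps)
      then have "x \<le> -1/(real n + 1)" by (simp add: field_simps)
      then show ?thesis using xn by auto
    qed simp
  qed
  have "(\<Union>n. {-1<..-1/(real n + 1)}) \<union> {0} \<in> null_sets ?M"
    using null_sets_UN[OF nul] z0 by (intro null_sets.Un) (auto intro: null_setsI)
  then have "{-1<..0} \<in> null_sets ?M" using null_sets_subset[OF _ _ cov] by simp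
  then have "emeasure ?M {-1<..0} = 0" by auto
  then have "ennreal (F y 0 - F y (-1)) = 0" using meas_Ioc[of "-1" 0 y] by simp
  then have "F y 0 \<le> 0" using Fm1 by (simp add: ennreal_eq_0_iff)
  then show ?thesis using F_nonneg[of y 0] by simp
qed

end


context specA begin

lemma K_sum:
  assumes y: "y \<in> Kset E p k" and s0: "s0 > 0" and q: "q \<ge> 1" and p: "p > 0"
  shows "(\<Sum>i<N. (s0 * q ^ Suc i) powr (-2 * p) * (F y (s0 * q ^ Suc i) - F y (s0 * q ^ i))) \<le> k^2"
proof -
  define t where "t i = s0 * q ^ i" for i
  define w where "w i = t (Suc i) powr (-2 * p)" for i
  let ?M = "spec_meas E y"
  let ?f = "\<lambda>s::real. if s = 0 then \<infinity> else ennreal (s powr (-2 * p))"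
  let ?I = "\<lambda>i. {t i<..t (Suc i)}"
  have tpos: "t i > 0" for i unfolding t_def using s0 q by simp
  have tmono: "t i \<le> t j" if "i \<le> j" for i j
    unfolding t_def using s0 q that by (intro mult_left_mono power_increasing) auto
  have tle: "t i \<le> t (Suc i)" for i using tmono by simp
  have dF: "F y (t (Suc i)) - F y (t i) \<ge> 0" for i using F_mono[OF tle] by simp
  have w0: "w i \<ge> 0" for i unfolding w_def by simp
  have K: "(\<integral>\<^sup>+ s. ?f s * indicator {0..} s \<partial>?M) \<le> ennreal (k^2)"
    using y unfolding Kset_def by simp
  have meas: "(\<lambda>x. ennreal (w i) * indicator (?I i) x) \<in> borel_measurable ?M" for i
    unfolding spec_F by measurable
  have pw: "(\<Sum>i<N. ennreal (w i) * indicator (?I i) x) \<le> ?f x * indicator {0..} x" for x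
  proof (cases "\<exists>j<N. x \<in> ?I j")
    case True
    then obtain j where j: "j < N" "x \<in> ?I j" by blast
    have xpos: "x > 0" using j tpos[of j] by auto
    have other: "x \<notin> ?I i" if "i \<noteq> j" for i
    proof (cases "i < j")
      case True
      then have "t (Suc i) \<le> t j" using tmono by simp
      then show ?thesis using j by auto
    next
      case False
      then have "j < i" using that by simp
      then have "t (Suc j) \<le> t i" using tmono by simp
      then show ?thesis using j by auto
    qed
    have "(\<Sum>i<N. ennreal (w i) * indicator (?I i) x) =
        ennreal (w j) * indicator (?I j) x + (\<Sum>i\<in>{..<N} - {j}. ennreal (w i) * indicator (?I i) x)"
      using j(1) by (intro sum.remove) auto
    also have "(\<Sum>i\<in>{..<N} - {j}. ennreal (w i) * indicator (?I i) x) = 0"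
      by (rule sum.neutral) (use other in auto)
    also have "ennreal (w j) * indicator (?I j) x = ennreal (w j)" using j by simp
    also have "w j \<le> x powr (-2 * p)"
      unfolding w_def using xpos j p by (intro powr_mono2') auto
    then have "ennreal (w j) \<le> ?f x * indicator {0..} x" using xpos by (simp add: ennreal_leI)
    finally show ?thesis by simp
  next
    case False
    then have "(\<Sum>i<N. ennreal (w i) * indicator (?I i) x) = 0"
      by (intro sum.neutral) auto
    then show ?thesis by simp
  qed
  have "ennreal (\<Sum>i<N. w i * (F y (t (Suc i)) - F y (t i))) = (\<Sum>i<N. ennreal (w i * (F y (t (Suc i)) - F y (t i))))"
    using w0 dF by (subst sum_ennreal) auto
  also have "\<dots> = (\<Sum>i<N. ennreal (w i) * emeasure ?M (?I i))"
    using w0 dF by (intro sum.cong refl) (simp add: ennreal_mult' meas_Ioc[OF tle])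
  also have "\<dots> = (\<Sum>i<N. \<integral>\<^sup>+ x. ennreal (w i) * indicator (?I i) x \<partial>?M)"
    by (intro sum.cong refl nn_integral_cmult_indicator[symmetric]) simp
  also have "\<dots> = (\<integral>\<^sup>+ x. (\<Sum>i<N. ennreal (w i) * indicator (?I i) x) \<partial>?M)"
    by (rule nn_integral_sum[symmetric]) (use meas in auto)
  also have "\<dots> \<le> (\<integral>\<^sup>+ s. ?f s * indicator {0..} s \<partial>?M)"
    by (intro nn_integral_mono pw)
  also have "\<dots> \<le> ennreal (k^2)" using K .
  finally have "(\<Sum>i<N. w i * (F y (t (Suc i)) - F y (t i))) \<le> k^2"
    by (simp add: ennreal_le_iff)
  then show ?thesis unfolding w_def t_def .
qed

lemma grid_step:
  assumes a: "a > 0" and p: "0 < p" "p < 1" and xT: "x \<in> T_dom DA A"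
    and s: "0 < s" "s \<le> s'"
  defines "y \<equiv> T_op DA A x + a *\<^sub>R x"
  shows "a^2 * (F x s' - F x s) \<le> (c_p p * a powr p)^2 * s powr (-2 * p) * (F y s' - F y s)"
proof -
  let ?z = "E s' x - E s x"
  let ?\<beta> = "norm (E s' y - E s y)"
  have b1: "s * norm ?z ^2 \<le> inner (T_op DA A ?z) ?z" by (rule Tz_bounds(1)[OF s(2)])
  have b2: "inner (T_op DA A ?z) ?z + a * norm ?z ^2 \<le> ?\<beta> * norm ?z"
    unfolding y_def by (rule band_ineq[OF s(2) xT])
  have "(s + a) * norm ?z ^2 \<le> ?\<beta> * norm ?z" using b1 b2 by (simp add: algebra_simps)
  then have sq: "(s + a)^2 * norm ?z ^2 \<le> ?\<beta>^2" using s a by (intro sq_helper) auto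
  have nz: "norm ?z ^2 = F x s' - F x s" by (rule band_norm[OF s(2)])
  have nb: "?\<beta>^2 = F y s' - F y s" by (rule band_norm[OF s(2)])
  have dFy: "F y s' - F y s \<ge> 0" using F_mono[OF s(2)] by simp
  have sa: "s + a > 0" using s a by simp
  have e: "(a / (s + a))^2 * ((s + a)^2 * norm ?z ^2) = a^2 * norm ?z ^2"
    using sa by (simp add: power_divide)
  have "a^2 * (F x s' - F x s) = (a / (s + a))^2 * ((s + a)^2 * norm ?z ^2)"
    by (simp only: nz[symmetric] e)
  also have "\<dots> \<le> (a / (s + a))^2 * (F y s' - F y s)"
    using sq nb by (intro mult_left_mono) auto
  also have "\<dots> \<le> (c_p p * a powr p)^2 * s powr (-2 * p) * (F y s' - F y s)"
    using amgm_sq[OF s(1) a p] dFy by (intro mult_right_mono) auto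
  finally show ?thesis .
qed

lemma lower_step:
  assumes a: "a > 0" and xT: "x \<in> T_dom DA A" and s0: "s0 > 0"
  defines "y \<equiv> T_op DA A x + a *\<^sub>R x"
  shows "a^2 * F x s0 \<le> F y s0"
proof -
  have st: "-1 \<le> s0" using s0 by simp
  let ?z = "E s0 x - E (-1) x"
  have z: "?z = E s0 x" using NEG[of "-1" x] by simp
  have zT: "?z \<in> T_dom DA A" by (rule band_TD[OF st])
  let ?\<beta> = "norm (E s0 y - E (-1) y)"
  have b2: "inner (T_op DA A ?z) ?z + a * norm ?z ^2 \<le> ?\<beta> * norm ?z"
    unfolding y_def by (rule band_ineq[OF st xT])
  have "inner (T_op DA A ?z) ?z \<ge> 0" using T_pos[OF zT] by simp
  then have "a * norm ?z ^2 \<le> ?\<beta> * norm ?z" using b2 by simp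
  then have "a^2 * norm ?z ^2 \<le> ?\<beta>^2" using a by (intro sq_helper) auto
  moreover have "norm ?z ^2 = F x s0" using z by (simp add: F_norm)
  moreover have "?\<beta>^2 = F y s0" using NEG[of "-1" y] by (simp add: F_norm)
  ultimately show ?thesis by simp
qed

end


context specA begin

lemma spec_bound:
  assumes a: "a > 0" and p: "0 < p" "p < 1" and k: "k > 0" and y: "y \<in> Kset E p k"
    and xT: "x \<in> T_dom DA A" and eq: "T_op DA A x + a *\<^sub>R x = y"
  shows "norm (a *\<^sub>R x) \<le> c_p p * k * a powr p"
proof -
  define C where "C = (c_p p * a powr p)^2"
  have C0: "C \<ge> 0" unfolding C_def by simp
  have A: "a^2 * F x (s0 * q ^ N) \<le> F y s0 + q powr (2 * p) * C * k^2"
    if s0: "s0 > 0" and q: "q > 1" for s0 q N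
  proof -
    define t where "t i = s0 * q ^ i" for i
    have tpos: "t i > 0" for i unfolding t_def using s0 q by simp
    have tS: "t (Suc i) = q * t i" for i unfolding t_def by simp
    have tle: "t i \<le> t (Suc i)" for i unfolding tS using tpos[of i] q by simp
    have pw: "t i powr (-2 * p) = q powr (2 * p) * t (Suc i) powr (-2 * p)" for i
    proof -
      have "t (Suc i) powr (-2 * p) = q powr (-2 * p) * t i powr (-2 * p)"
        unfolding tS using q tpos[of i] by (simp add: powr_mult)
      moreover have "q powr (2 * p) * q powr (-2 * p) = 1" using q by (simp add: powr_add[symmetric])
      ultimately show ?thesis by (simp add: mult.assoc[symmetric])
    qed
    have step: "a^2 * (F x (t (Suc i)) - F x (t i)) \<le>
        (C * q powr (2 * p)) * (t (Suc i) powr (-2 * p) * (F y (t (Suc i)) - F y (t i)))" for i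
    proof -
      have g: "a^2 * (F x (t (Suc i)) - F x (t i)) \<le> C * t i powr (-2 * p) * (F y (t (Suc i)) - F y (t i))"
        using grid_step[OF a p xT tpos[of i] tle[of i]] eq unfolding C_def by simp
      show ?thesis using g unfolding pw[of i] by (simp add: mult_ac)
    qed
    have "a^2 * (F x (t N) - F x (t 0)) = (\<Sum>i<N. a^2 * (F x (t (Suc i)) - F x (t i)))"
      by (simp add: sum_distrib_left[symmetric] sum_lessThan_telescope[of "\<lambda>i. F x (t i)"])
    also have "\<dots> \<le> (\<Sum>i<N. (C * q powr (2 * p)) * (t (Suc i) powr (-2 * p) * (F y (t (Suc i)) - F y (t i))))"
      by (intro sum_mono step)
    also have "\<dots> = (C * q powr (2 * p)) * (\<Sum>i<N. t (Suc i) powr (-2 * p) * (F y (t (Suc i)) - F y (t i)))"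
      by (simp add: sum_distrib_left)
    also have "\<dots> \<le> (C * q powr (2 * p)) * k^2"
      using K_sum[OF y s0 _ p(1), of q N] q C0 unfolding t_def by (intro mult_left_mono) auto
    finally have "a^2 * (F x (t N) - F x (t 0)) \<le> (C * q powr (2 * p)) * k^2" .
    moreover have "a^2 * F x s0 \<le> F y s0" using lower_step[OF a xT s0] eq by simp
    moreover have "t 0 = s0" unfolding t_def by simp
    ultimately show ?thesis unfolding t_def by (simp add: algebra_simps)
  qed
  have B: "a^2 * F x T \<le> F y s0 + q powr (2 * p) * C * k^2"
    if s0: "s0 > 0" and q: "q > 1" for s0 q T
  proof -
    obtain N where "T / s0 < q ^ N" using real_arch_pow[OF q] by blast
    then have "T \<le> s0 * q ^ N" using s0 by (simp add: field_simps)
    then have "F x T \<le> F x (s0 * q ^ N)" by (rule F_mono)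
    then have "a^2 * F x T \<le> a^2 * F x (s0 * q ^ N)" by (simp add: mult_left_mono)
    then show ?thesis using A[OF s0 q, of N] by linarith
  qed
  have lim1: "((\<lambda>T. a^2 * F x T) \<longlongrightarrow> a^2 * inner x x) at_top"
    unfolding F_def by (intro tendsto_intros Etop)
  have C1: "a^2 * inner x x \<le> F y s0 + q powr (2 * p) * C * k^2"
    if s0: "s0 > 0" and q: "q > 1" for s0 q
    by (rule tendsto_le[OF _ tendsto_const lim1]) (use B[OF s0 q] in auto)
  have lim2: "((\<lambda>s0. F y s0 + q powr (2 * p) * C * k^2) \<longlongrightarrow> F y 0 + q powr (2 * p) * C * k^2) (at_right 0)"
    for q using F_rc[of 0 y] unfolding continuous_within by (intro tendsto_intros)
  have C2: "a^2 * inner x x \<le> q powr (2 * p) * C * k^2" if q: "q > 1" for q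
  proof -
    have "a^2 * inner x x \<le> F y 0 + q powr (2 * p) * C * k^2"
      by (rule tendsto_le[OF _ lim2 tendsto_const])
         (auto intro: eventually_mono[OF eventually_at_right_less] C1[OF _ q])
    then show ?thesis using F_K0[OF y] by simp
  qed
  have lim3: "((\<lambda>q. q powr (2 * p) * C * k^2) \<longlongrightarrow> 1 powr (2 * p) * C * k^2) (at_right 1)"
    by (intro tendsto_intros) auto
  have "a^2 * inner x x \<le> 1 powr (2 * p) * C * k^2"
    by (rule tendsto_le[OF _ lim3 tendsto_const])
       (auto intro: eventually_mono[OF eventually_at_right_less] C2)
  then have "norm (a *\<^sub>R x)^2 \<le> (c_p p * k * a powr p)^2"
    unfolding C_def by (simp add: power2_norm_eq_inner power_mult_distrib algebra_simps)
  moreover have "c_p p * k * a powr p \<ge> 0" unfolding c_p_def using p k by simp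
  ultimately show ?thesis by (rule power2_le_imp_le)
qed

lemma bound_ii:
  assumes a: "a > 0" and p: "0 < p" "p < 1" and k: "k > 0"
    and y: "y \<in> Kset E p k" "y \<in> DA" and d: "norm (A y - fd) \<le> \<delta>"
  shows "norm (Rop DA A a fd - y) \<le> \<delta> / (2 * sqrt a) + c_p p * k * a powr p"
proof -
  obtain x where xT: "x \<in> T_dom DA A" and eq: "T_op DA A x + a *\<^sub>R x = y"
    using T_surj[OF a] by blast
  have bl: "bounded_linear (Lres a)" by (rule Lres_linear[OF a])
  have LA: "Lres a (A y) = y - a *\<^sub>R x" by (rule Lres_A[OF a y(2) xT eq])
  have "Lres a fd = Lres a (fd - A y) + Lres a (A y)"
    using linear_diff[OF bounded_linear.linear[OF bl], of fd "A y"] by simp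
  then have "Rop DA A a fd - y = Lres a (fd - A y) - a *\<^sub>R x"
    using Rop_eq[OF a] LA by simp
  then have "norm (Rop DA A a fd - y) \<le> norm (Lres a (fd - A y)) + norm (a *\<^sub>R x)"
    using norm_triangle_ineq4[of "Lres a (fd - A y)" "a *\<^sub>R x"] by (simp only:)
  also have "norm (Lres a (fd - A y)) \<le> norm (fd - A y) / (2 * sqrt a)" by (rule Lres_bound[OF a])
  also have "\<dots> \<le> \<delta> / (2 * sqrt a)" using d a by (simp add: norm_minus_commute divide_right_mono)
  also have "norm (a *\<^sub>R x) \<le> c_p p * k * a powr p" by (rule spec_bound[OF a p k y(1) xT eq])
  finally show ?thesis by simp
qed

end


lemma cp_pos: "0 < p \<Longrightarrow> p < 1 \<Longrightarrow> c_p p > 0" unfolding c_p_def by simp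

lemma bp_pos: "0 < p \<Longrightarrow> p < 1 \<Longrightarrow> k > 0 \<Longrightarrow> b_p p k > 0"
  unfolding b_p_def using cp_pos[of p] by simp

lemma opt_identity:
  fixes \<delta> p k :: real
  assumes d: "\<delta> > 0" and p: "0 < p" "p < 1" and k: "k > 0"
  shows "\<delta> / (2 * sqrt (b_p p k * \<delta> powr (2 / (2 * p + 1))))
          + c_p p * k * (b_p p k * \<delta> powr (2 / (2 * p + 1))) powr p
          = C_p p k * \<delta> powr (2 * p / (2 * p + 1))"
proof -
  let ?b = "b_p p k" and ?e = "1 / (2 * p + 1)"
  have b: "?b > 0" using bp_pos[OF p k] .
  have pp: "2 * p + 1 > 0" using p by simp
  have h1: "sqrt (\<delta> powr (2 / (2 * p + 1))) = \<delta> powr ?e"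
  proof -
    have "\<delta> powr ((2 / (2 * p + 1)) / 2) = sqrt (\<delta> powr (2 / (2 * p + 1)))"
      using d by (intro powr_half_sqrt_powr) simp
    moreover have "(2 / (2 * p + 1)) / 2 = ?e" using pp by (simp add: field_simps)
    ultimately show ?thesis by simp
  qed
  have h2: "\<delta> / \<delta> powr ?e = \<delta> powr (2 * p / (2 * p + 1))"
  proof -
    have "2 * p / (2 * p + 1) + ?e = 1" using pp by (simp add: field_simps)
    then have "\<delta> powr (2 * p / (2 * p + 1)) * \<delta> powr ?e = \<delta>"
      using d by (simp add: powr_add[symmetric])
    then show ?thesis using d by (simp add: field_simps)
  qed
  have h3: "(\<delta> powr (2 / (2 * p + 1))) powr p = \<delta> powr (2 * p / (2 * p + 1))"
    by (simp add: powr_powr mult.commute)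
  have "\<delta> / (2 * sqrt (?b * \<delta> powr (2 / (2 * p + 1)))) = (1 / (2 * sqrt ?b)) * (\<delta> / \<delta> powr ?e)"
    using b d by (simp add: real_sqrt_mult h1)
  also have "\<dots> = (1 / (2 * sqrt ?b)) * \<delta> powr (2 * p / (2 * p + 1))" using h2 by simp
  finally have t1: "\<delta> / (2 * sqrt (?b * \<delta> powr (2 / (2 * p + 1)))) = (1 / (2 * sqrt ?b)) * \<delta> powr (2 * p / (2 * p + 1))" .
  have t2: "(?b * \<delta> powr (2 / (2 * p + 1))) powr p = ?b powr p * \<delta> powr (2 * p / (2 * p + 1))"
    using b d by (simp add: powr_mult h3)
  show ?thesis unfolding t1 t2 C_p_def by (simp add: algebra_simps)
qed

lemma opt_min:
  fixes \<delta> p k a :: real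
  assumes d: "\<delta> > 0" and p: "0 < p" "p < 1" and k: "k > 0" and a: "a > 0"
    and ne: "a \<noteq> b_p p k * \<delta> powr (2 / (2 * p + 1))"
  shows "\<delta> / (2 * sqrt (b_p p k * \<delta> powr (2 / (2 * p + 1))))
           + c_p p * k * (b_p p k * \<delta> powr (2 / (2 * p + 1))) powr p
         < \<delta> / (2 * sqrt a) + c_p p * k * a powr p"
proof -
  define K where "K = c_p p * k"
  have K: "K > 0" unfolding K_def using cp_pos[OF p] k by simp
  define as where "as = b_p p k * \<delta> powr (2 / (2 * p + 1))"
  have pp: "2 * p + 1 > 0" using p by simp
  have asp: "as > 0" unfolding as_def using bp_pos[OF p k] d by simp
  have as_eq: "as = (\<delta> / (4 * p * K)) powr (2 / (2 * p + 1))"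
    unfolding as_def b_p_def K_def using d p K[unfolded K_def]
    by (simp add: powr_divide powr_minus_divide mult.assoc)
  have as_pow: "as powr (p + 1/2) = \<delta> / (4 * p * K)"
  proof -
    have "(2 / (2 * p + 1)) * (p + 1/2) = 1" using pp by (simp add: field_simps)
    then show ?thesis unfolding as_eq using d p K by (simp add: powr_powr)
  qed
  define f where "f x = \<delta> / 2 * x powr (-1/2) + K * x powr p" for x :: real
  define f' where "f' x = \<delta> / 2 * ((-1/2) * x powr (-1/2 - 1)) + K * (p * x powr (p - 1))" for x :: real
  have fg: "f x = \<delta> / (2 * sqrt x) + K * x powr p" if "x > 0" for x
    unfolding f_def using that by (simp add: powr_minus_divide powr_half_sqrt)
  have der: "(f has_real_derivative f' x) (at x)" if "x > 0" for x
    unfolding f_def f'_def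
    by (intro DERIV_add DERIV_cmult has_real_derivative_powr that)
  have f'eq: "f' x = x powr (-3/2) * (K * p * x powr (p + 1/2) - \<delta> / 4)" if x: "x > 0" for x
  proof -
    have "x powr (p - 1) = x powr (-3/2) * x powr (p + 1/2)" using x by (simp add: powr_add[symmetric])
    moreover have "-1/2 - 1 = (-3/2::real)" by simp
    ultimately show ?thesis unfolding f'_def by (simp add: algebra_simps)
  qed
  have sgn_neg: "f' x < 0" if "0 < x" "x < as" for x
  proof -
    have "x powr (p + 1/2) < as powr (p + 1/2)" using that p by (intro powr_less_mono2) auto
    then have "K * p * x powr (p + 1/2) < K * p * as powr (p + 1/2)"
      using K p by (intro mult_strict_left_mono) auto
    also have "K * p * as powr (p + 1/2) = \<delta> / 4" using as_pow K p by simp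
    finally have "K * p * x powr (p + 1/2) < \<delta> / 4" .
    then show ?thesis using f'eq[OF that(1)] that(1) by (simp add: mult_pos_neg)
  qed
  have sgn_pos: "f' x > 0" if "as < x" for x
  proof -
    have x: "x > 0" using that asp by simp
    have "as powr (p + 1/2) < x powr (p + 1/2)" using that p asp by (intro powr_less_mono2) auto
    then have "K * p * as powr (p + 1/2) < K * p * x powr (p + 1/2)"
      using K p by (intro mult_strict_left_mono) auto
    moreover have "K * p * as powr (p + 1/2) = \<delta> / 4" using as_pow K p by simp
    ultimately have "K * p * x powr (p + 1/2) > \<delta> / 4" by simp
    then show ?thesis using f'eq[OF x] x by simp
  qed
  have cont: "continuous_on {u..v} f" if "u > 0" for u v
  proof (rule continuous_at_imp_continuous_on, intro ballI)
    fix x assume "x \<in> {u..v}"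
    then have "x > 0" using that by auto
    then show "isCont f x" using DERIV_isCont[OF der] by blast
  qed
  have "f as < f a"
  proof (cases "a < as")
    case True
    show ?thesis
      by (rule DERIV_neg_imp_decreasing_open[OF True _ cont[OF a]])
         (use der sgn_neg a in \<open>force\<close>)
  next
    case False
    then have "as < a" using ne as_def by auto
    show ?thesis
    proof (rule DERIV_pos_imp_increasing_open[OF \<open>as < a\<close> _ cont[OF asp]])
      fix x assume x: "as < x" "x < a"
      then have "x > 0" using asp by simp
      then show "\<exists>y. (f has_real_derivative y) (at x) \<and> 0 < y"
        using der[of x] sgn_pos[OF x(1)] by blast
    qed
  qed
  then show ?thesis using fg[OF a] fg[OF asp] unfolding K_def as_def by simp
qed

lemma eta_lim:
  fixes a :: "real \<Rightarrow> real" and p k :: real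
  assumes pos: "\<forall>\<delta>>0. a \<delta> > 0" and a0: "(a \<longlongrightarrow> 0) (at_right 0)"
    and ad: "((\<lambda>\<delta>. \<delta> / sqrt (a \<delta>)) \<longlongrightarrow> 0) (at_right 0)" and p: "p > 0"
  shows "((\<lambda>\<delta>. \<delta> / (2 * sqrt (a \<delta>)) + c_p p * k * a \<delta> powr p) \<longlongrightarrow> 0) (at_right 0)"
proof -
  have e1: "(\<lambda>\<delta>. \<delta> / (2 * sqrt (a \<delta>))) = (\<lambda>\<delta>. (\<delta> / sqrt (a \<delta>)) / 2)" by (simp add: field_simps)
  have l1: "((\<lambda>\<delta>. \<delta> / (2 * sqrt (a \<delta>))) \<longlongrightarrow> 0) (at_right 0)"
    unfolding e1 using tendsto_divide[OF ad tendsto_const[of 2]] by simp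
  have ev: "\<forall>\<^sub>F \<delta> in at_right 0. 0 \<le> a \<delta>"
    using eventually_at_right_less[of "0::real"] by (rule eventually_mono) (use pos in \<open>auto simp: less_imp_le\<close>)
  have l2: "((\<lambda>\<delta>. a \<delta> powr p) \<longlongrightarrow> 0) (at_right 0)"
    by (rule tendsto_zero_powrI[OF a0 tendsto_const ev p])
  have "((\<lambda>\<delta>. \<delta> / (2 * sqrt (a \<delta>)) + c_p p * k * a \<delta> powr p) \<longlongrightarrow> 0 + c_p p * k * 0) (at_right 0)"
    by (intro tendsto_add tendsto_mult l1 l2 tendsto_const)
  then show ?thesis by simp
qed



theorem theorem2p1:
  fixes DA :: "'a::{real_inner,complete_space} set" and A :: "'a \<Rightarrow> 'a"
    and E :: "real \<Rightarrow> 'a \<Rightarrow> 'a" and p kp :: real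
  assumes lin: "linear_op DA A"
    and closedA: "closed {(x, A x) | x. x \<in> DA}"
    and dense: "closure DA = UNIV"
    and E: "resolution_of_identity E (T_dom DA A) (T_op DA A)"
    and p: "0 < p" "p < 1"
    and kp: "0 < kp"
  shows
    "(\<forall>(a :: real \<Rightarrow> real) (f :: real \<Rightarrow> 'a).
        (\<forall>\<delta>>0. a \<delta> > 0) \<and> (a \<longlongrightarrow> 0) (at_right 0) \<and>
        ((\<lambda>\<delta>. \<delta> / sqrt (a \<delta>)) \<longlongrightarrow> 0) (at_right 0) \<longrightarrow>
        (\<exists>\<eta> :: real \<Rightarrow> real. (\<eta> \<longlongrightarrow> 0) (at_right 0) \<and>
           (\<forall>\<delta>>0. \<forall>v\<in>Sdelta (Kset E p kp) DA A \<delta> (f \<delta>).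
              norm (Rop DA A (a \<delta>) (f \<delta>) - v) \<le> \<eta> \<delta>)))
     \<and>
     (\<forall>\<delta>>0. \<forall>fd :: 'a.
        (\<forall>y\<in>Kset E p kp \<inter> DA. norm (A y - fd) \<le> \<delta> \<longrightarrow>
           norm (Rop DA A (b_p p kp * \<delta> powr (2 / (2 * p + 1))) fd - y)
             \<le> C_p p kp * \<delta> powr (2 * p / (2 * p + 1))) \<and>
        (\<forall>a>0. a \<noteq> b_p p kp * \<delta> powr (2 / (2 * p + 1)) \<longrightarrow>
           \<delta> / (2 * sqrt (b_p p kp * \<delta> powr (2 / (2 * p + 1))))
             + c_p p * kp * (b_p p kp * \<delta> powr (2 / (2 * p + 1))) powr p
           < \<delta> / (2 * sqrt a) + c_p p * kp * a powr p) \<and>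
        \<delta> / (2 * sqrt (b_p p kp * \<delta> powr (2 / (2 * p + 1))))
          + c_p p * kp * (b_p p kp * \<delta> powr (2 / (2 * p + 1))) powr p
          = C_p p kp * \<delta> powr (2 * p / (2 * p + 1)))"
proof -
  interpret specA DA A E
    by unfold_locales (rule lin, rule closedA, rule dense, rule E)
  have part1: "\<forall>(a :: real \<Rightarrow> real) (f :: real \<Rightarrow> 'a).
        (\<forall>\<delta>>0. a \<delta> > 0) \<and> (a \<longlongrightarrow> 0) (at_right 0) \<and>
        ((\<lambda>\<delta>. \<delta> / sqrt (a \<delta>)) \<longlongrightarrow> 0) (at_right 0) \<longrightarrow>
        (\<exists>\<eta> :: real \<Rightarrow> real. (\<eta> \<longlongrightarrow> 0) (at_right 0) \<and>
           (\<forall>\<delta>>0. \<forall>v\<in>Sdelta (Kset E p kp) DA A \<delta> (f \<delta>).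
              norm (Rop DA A (a \<delta>) (f \<delta>) - v) \<le> \<eta> \<delta>))"
  proof (intro allI impI)
    fix a :: "real \<Rightarrow> real" and f :: "real \<Rightarrow> 'a"
    assume H: "(\<forall>\<delta>>0. a \<delta> > 0) \<and> (a \<longlongrightarrow> 0) (at_right 0) \<and>
        ((\<lambda>\<delta>. \<delta> / sqrt (a \<delta>)) \<longlongrightarrow> 0) (at_right 0)"
    define \<eta> where "\<eta> \<delta> = \<delta> / (2 * sqrt (a \<delta>)) + c_p p * kp * a \<delta> powr p" for \<delta>
    have lim: "(\<eta> \<longlongrightarrow> 0) (at_right 0)"
      unfolding \<eta>_def using eta_lim[of a p kp] H p(1) by blast
    have bnd: "\<forall>\<delta>>0. \<forall>v\<in>Sdelta (Kset E p kp) DA A \<delta> (f \<delta>).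
              norm (Rop DA A (a \<delta>) (f \<delta>) - v) \<le> \<eta> \<delta>"
    proof (intro allI impI ballI)
      fix \<delta> :: real and v assume d: "\<delta> > 0" and v: "v \<in> Sdelta (Kset E p kp) DA A \<delta> (f \<delta>)"
      have vK: "v \<in> Kset E p kp" "v \<in> DA" "norm (A v - f \<delta>) \<le> \<delta>" using v unfolding Sdelta_def by auto
      have ad: "a \<delta> > 0" using H d by blast
      show "norm (Rop DA A (a \<delta>) (f \<delta>) - v) \<le> \<eta> \<delta>"
        unfolding \<eta>_def by (rule bound_ii[OF ad p kp vK])
    qed
    show "\<exists>\<eta> :: real \<Rightarrow> real. (\<eta> \<longlongrightarrow> 0) (at_right 0) \<and>
           (\<forall>\<delta>>0. \<forall>v\<in>Sdelta (Kset E p kp) DA A \<delta> (f \<delta>).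
              norm (Rop DA A (a \<delta>) (f \<delta>) - v) \<le> \<eta> \<delta>)"
      using lim bnd by blast
  qed
  have part2: "\<forall>\<delta>>0. \<forall>fd :: 'a.
        (\<forall>y\<in>Kset E p kp \<inter> DA. norm (A y - fd) \<le> \<delta> \<longrightarrow>
           norm (Rop DA A (b_p p kp * \<delta> powr (2 / (2 * p + 1))) fd - y)
             \<le> C_p p kp * \<delta> powr (2 * p / (2 * p + 1))) \<and>
        (\<forall>a>0. a \<noteq> b_p p kp * \<delta> powr (2 / (2 * p + 1)) \<longrightarrow>
           \<delta> / (2 * sqrt (b_p p kp * \<delta> powr (2 / (2 * p + 1))))
             + c_p p * kp * (b_p p kp * \<delta> powr (2 / (2 * p + 1))) powr p
           < \<delta> / (2 * sqrt a) + c_p p * kp * a powr p) \<and>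
        \<delta> / (2 * sqrt (b_p p kp * \<delta> powr (2 / (2 * p + 1))))
          + c_p p * kp * (b_p p kp * \<delta> powr (2 / (2 * p + 1))) powr p
          = C_p p kp * \<delta> powr (2 * p / (2 * p + 1))"
  proof (intro allI impI conjI ballI)
    fix \<delta> :: real and fd :: 'a assume d: "\<delta> > 0"
    have as: "b_p p kp * \<delta> powr (2 / (2 * p + 1)) > 0" using bp_pos[OF p kp] d by simp
    show idt: "\<delta> / (2 * sqrt (b_p p kp * \<delta> powr (2 / (2 * p + 1))))
          + c_p p * kp * (b_p p kp * \<delta> powr (2 / (2 * p + 1))) powr p
          = C_p p kp * \<delta> powr (2 * p / (2 * p + 1))"
      by (rule opt_identity[OF d p kp])
    {
      fix y assume y: "y \<in> Kset E p kp \<inter> DA" "norm (A y - fd) \<le> \<delta>"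
      have "norm (Rop DA A (b_p p kp * \<delta> powr (2 / (2 * p + 1))) fd - y)
          \<le> \<delta> / (2 * sqrt (b_p p kp * \<delta> powr (2 / (2 * p + 1))))
            + c_p p * kp * (b_p p kp * \<delta> powr (2 / (2 * p + 1))) powr p"
        using y by (intro bound_ii[OF as p kp]) auto
      then show "norm (Rop DA A (b_p p kp * \<delta> powr (2 / (2 * p + 1))) fd - y)
             \<le> C_p p kp * \<delta> powr (2 * p / (2 * p + 1))" using idt by simp
    }
    fix a :: real assume a: "a > 0" "a \<noteq> b_p p kp * \<delta> powr (2 / (2 * p + 1))"
    show "\<delta> / (2 * sqrt (b_p p kp * \<delta> powr (2 / (2 * p + 1))))
             + c_p p * kp * (b_p p kp * \<delta> powr (2 / (2 * p + 1))) powr p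
           < \<delta> / (2 * sqrt a) + c_p p * kp * a powr p"
      by (rule opt_min[OF d p kp a])
  qed
  show ?thesis using part1 part2 by blast
qed


end
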